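(* Consider the following optimal control problem. Let $T>0$, let $U\subseteq\mathbb{R}^k$ be compact with $0\in U$, let $f:[0,T]\times\mathbb{R}^n\times U\to\mathbb{R}^n$ be continuous and continuously differentiable in its second and third arguments, let $x_0\in\mathbb{R}^n$, let $\mathcal U$ be the set of measurable functions $u:[0,T]\to U$, let $\phi:[0,T]\times\mathbb{R}^n\times U\to\mathbb{R}$ be differentiable in its second argument, and let $\psi:\mathbb{R}^n\to\mathbb{R}$ be differentiable. The cost of $u\in\mathcal U$ is $J[u]=\int_0^T\phi(t,x_u(t),u(t))\,dt+\psi(x_u(T))$, where $x_u$ solves $\dot x(t)=f(t,x(t),u(t))$, $x(0)=x_0$. Assume the problem is nonsingular, and for $u\in\mathcal U$ let $\lambda_u$ be the costate solving $\dot\lambda(t)=-D_xf(t,x_u(t),u(t))^\top\lambda(t)-\phi_x(t,x_u(t),u(t))$, $\lambda(T)=\psi_x(x_u(T))$. Let $H(t,x,\lambda,u)=\lambda^\top f(t,x,u)+\phi(t,x,u)$, and let $\mathrm{MSA}:\mathcal U\to\mathcal U$ be the operator with $\mathrm{MSA}(u)(t)\in\arg\min_{\tilde u\in U}H(t,x_u(t),\lambda_u(t),\tilde u)$ for all $t\in[0,T]$ (ties broken by a fixed rule). Let $X,\Lambda\subset\mathbb{R}^n$ be bounded sets such that $x_u(t)\in X$ and $\lambda_u(t)\in\Lambda$ for all $u\in\mathcal U$ and $t\in[0,T]$. Fix a norm $\|\cdot\|$ on $\mathbb{R}^n$ with dual norm $\|\cdot\|_\star$, and a norm $\|\cdot\|_U$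 on $\mathbb{R}^k$. Assume: (A1) there is $c>0$ such that for all $t\in[0,T]$ and $\tilde u\in U$, the map $x\mapsto f(t,x,\tilde u)$ has one-sided Lipschitz constant at most $-c$ with respect to $\|\cdot\|$; moreover the solution of $\dot x=f(t,x,0)$, $x(0)=x_0$, is bounded on $[0,T]$; (A2) for all $t\in[0,T]$ and $\tilde x\in\mathbb{R}^n$, the map $u\mapsto f(t,\tilde x,u)$ is Lipschitz from $(U,\|\cdot\|_U)$ to $(\mathbb{R}^n,\|\cdot\|)$ with constant $\ell_{f,u}$; (A3) for all $t\in[0,T]$, $\tilde x\in X$, $\tilde u\in U$, $\tilde\lambda\in\Lambda$: the map $x\mapsto D_xf(t,x,\tilde u)^\top\tilde\lambda$ is Lipschitz from $(\mathbb{R}^n,\|\cdot\|)$ to $(\mathbb{R}^n,\|\cdot\|_\star)$ with constant $\ell_{f_x,x}$, and the map $u\mapsto D_xf(t,\tilde x,u)^\top\tilde\lambda$ is Lipschitz from $(U,\|\cdot\|_U)$ to $(\mathbb{R}^n,\|\cdot\|_\star)$ with constant $\ell_{f_x,u}$; (A4) for all $t\in[0,T]$, $\tilde x\in X$, $\tilde u\in U$: $x\mapsto\phi_x(t,x,\tilde u)$ is Lipschitz from $(\mathbb{R}^n,\|\cdot\|)$ to $(\mathbb{R}^n,\|\cdot\|_\star)$ with constant $\ell_{\phi_x,x}$; $u\mapsto\phi_x(t,\tilde x,u)$ is Lipschitz from $(U,\|\cdot\|_U)$ to $(\mathbb{R}^n,\|\cdot\|_\star)$ with constant $\ell_{\phi_x,u}$;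 and $x\mapsto\psi_x(x)$ is Lipschitz from $(\mathbb{R}^n,\|\cdot\|)$ to $(\mathbb{R}^n,\|\cdot\|_\star)$ with constant $\ell_{\psi_x,x}$; (A5) there is a map $h:[0,T]\times X\times\Lambda\to U$ with $h(t,x,\lambda)\in\arg\min_{u\in U}H(t,x,\lambda,u)$ for all $(t,x,\lambda)$, with ties broken identically to the MSA operator (so $\mathrm{MSA}(u)(t)=h(t,x_u(t),\lambda_u(t))$), such that for all fixed $t$, $\tilde x\in X$, $\tilde\lambda\in\Lambda$, the map $x\mapsto h(t,x,\tilde\lambda)$ is Lipschitz from $(\mathbb{R}^n,\|\cdot\|)$ to $(\mathbb{R}^k,\|\cdot\|_U)$ with constant $\ell_{h,x}$, and $\lambda\mapsto h(t,\tilde x,\lambda)$ is Lipschitz from $(\mathbb{R}^n,\|\cdot\|_\star)$ to $(\mathbb{R}^k,\|\cdot\|_U)$ with constant $\ell_{h,\lambda}$. Equip $\mathcal U$ with the norm $\|u\|_{\mathcal U}=\sup_{t\in[0,T]}\|u(t)\|_U$, and set $\kappa=c^{-1}(1-e^{-cT})$, $b_1=\ell_{h,x}\ell_{f,u}+\ell_{h,\lambda}(\ell_{\psi_x,x}\ell_{f,u}+\ell_{\phi_x,u}+\ell_{f_x,u})$, $b_2=\ell_{h,\lambda}\ell_{f,u}(\ell_{\phi_x,x}+\ell_{f_x,x})$. Then: (i) the Lipschitz constant of $\mathrm{MSA}$ with respect to $\|\cdot\|_{\mathcal U}$ satisfies ${\rm Lip}(\mathrm{MSA})\le b_1\kappa+b_2\kappa^2$;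 (ii) if $b_1\kappa+b_2\kappa^2<1$, then $\mathrm{MSA}$ is a contraction, it has a unique fixed point $\hat u\in\mathcal U$, the iterates $u^{(i)}=\mathrm{MSA}^i(u^{(0)})$ converge to $\hat u$ from any $u^{(0)}\in\mathcal U$, and for all $t\in[0,T]$ and all $i$, $\|u^{(i)}(t)-\hat u(t)\|_U\le\frac{(b_1\kappa+b_2\kappa^2)^i}{1-b_1\kappa-b_2\kappa^2}\|u^{(1)}-u^{(0)}\|_{\mathcal U}$.
   Context: The dual norm is $\|z\|_\star=\sup_{\|y\|\le1}y^\top z$. For a matrix $A$, the induced norm is $\|A\|=\sup_{\|x\|=1}\|Ax\|$ and the logarithmic norm is $\mu(A)=\lim_{h\to0^+}(\|I_n+hA\|-1)/h$. For a continuously differentiable $F:\mathbb{R}^n\to\mathbb{R}^n$, its one-sided Lipschitz constant with respect to $\|\cdot\|$ is $\sup_{x\in\mathbb{R}^n}\mu(DF(x))$. A map between normed spaces is Lipschitz with constant $\ell$ if $\|T(x)-T(\bar x)\|\le\ell\|x-\bar x\|$ for all $x,\bar x$. "Nonsingular" means that the multiplier of the running cost in Pontryagin's minimum principle is normalized to $1$, i.e. the Hamiltonian and costate are as given above. State and costate solutions are assumed to exist on $[0,T]$. *)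

theory Defs
  imports "HOL-Analysis.Analysis"
begin

definition is_norm :: "('a::real_vector \<Rightarrow> real) \<Rightarrow> bool" where
  "is_norm N \<longleftrightarrow> (\<forall>x. N x = 0 \<longleftrightarrow> x = 0) \<and> (\<forall>x y. N (x + y) \<le> N x + N y)
     \<and> (\<forall>a x. N (a *\<^sub>R x) = \<bar>a\<bar> * N x)"

definition dual_norm :: "('a::real_inner \<Rightarrow> real) \<Rightarrow> 'a \<Rightarrow> real" where
  "dual_norm N z = Sup {y \<bullet> z | y. N y \<le> 1}"

definition induced_norm :: "(real^'n \<Rightarrow> real) \<Rightarrow> real^'n^'n \<Rightarrow> real" where
  "induced_norm N A = Sup {N (A *v x) | x. N x = 1}"

definition log_norm :: "(real^'n \<Rightarrow> real) \<Rightarrow> real^'n^'n \<Rightarrow> real" where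
  "log_norm N A = Lim (at_right 0) (\<lambda>h. (induced_norm N (mat 1 + h *\<^sub>R A) - 1) / h)"

definition lip_with :: "('a::ab_group_add \<Rightarrow> real) \<Rightarrow> ('b::ab_group_add \<Rightarrow> real) \<Rightarrow> 'a set
    \<Rightarrow> ('a \<Rightarrow> 'b) \<Rightarrow> real \<Rightarrow> bool" where
  "lip_with Nd Nc S F L \<longleftrightarrow> (\<forall>x\<in>S. \<forall>y\<in>S. Nc (F x - F y) \<le> L * Nd (x - y))"

text \<open>Admissible controls: measurable maps [0,T] -> U (extended by 0 outside [0,T],
  so that controls are identified with their restriction to [0,T]).\<close>
definition controls :: "real \<Rightarrow> (real^'k) set \<Rightarrow> (real \<Rightarrow> real^'k) set" where
  "controls T U = {u. u \<in> borel_measurable lborel \<and> (\<forall>t\<in>{0..T}. u t \<in> U)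
                      \<and> (\<forall>t. t \<notin> {0..T} \<longrightarrow> u t = 0)}"

definition ctrl_dist :: "real \<Rightarrow> (real^'k \<Rightarrow> real) \<Rightarrow> (real \<Rightarrow> real^'k) \<Rightarrow> (real \<Rightarrow> real^'k) \<Rightarrow> real" where
  "ctrl_dist T NU u v = Sup ((\<lambda>t. NU (u t - v t)) ` {0..T})"

definition hamiltonian :: "(real \<Rightarrow> real^'n \<Rightarrow> real^'k \<Rightarrow> real^'n) \<Rightarrow> (real \<Rightarrow> real^'n \<Rightarrow> real^'k \<Rightarrow> real)
   \<Rightarrow> real \<Rightarrow> real^'n \<Rightarrow> real^'n \<Rightarrow> real^'k \<Rightarrow> real" where
  "hamiltonian f \<phi> t x l v = l \<bullet> f t x v + \<phi> t x v"

end

theory Submission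
  imports Defs
begin

lemma is_normD:
  assumes "is_norm N"
  shows "N (x + y) \<le> N x + N y" "N (a *\<^sub>R x) = \<bar>a\<bar> * N x" "N x = 0 \<longleftrightarrow> x = 0"
  using assms unfolding is_norm_def by auto

lemma is_norm_zero: "is_norm N \<Longrightarrow> N 0 = 0"
  using is_normD(3) by blast

lemma is_norm_minus: "is_norm N \<Longrightarrow> N (- x) = N x"
  using is_normD(2)[of N "-1" x] by simp

lemma is_norm_commute: "is_norm N \<Longrightarrow> N (x - y) = N (y - x)"
  using is_norm_minus[of N "x - y"] by simp

lemma is_norm_nonneg: "is_norm N \<Longrightarrow> N x \<ge> 0"
proof -
  assume n: "is_norm N"
  have "N (x + - x) \<le> N x + N (- x)" using is_normD(1)[OF n] .
  then show ?thesis using is_norm_zero[OF n] is_norm_minus[OF n, of x] by simp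
qed

lemma is_norm_diff: "is_norm N \<Longrightarrow> N (x - y) \<le> N x + N y"
  using is_normD(1)[of N x "-y"] is_norm_minus[of N y] by simp

lemma is_norm_sum: "is_norm N \<Longrightarrow> N (sum f S) \<le> (\<Sum>i\<in>S. N (f i))"
proof (induction S rule: infinite_finite_induct)
  case (infinite A) then show ?case by (simp add: is_norm_zero)
next
  case empty then show ?case by (simp add: is_norm_zero)
next
  case (insert x F)
  then show ?case using is_normD(1)[OF insert(4), of "f x" "sum f F"] by simp
qed

lemma is_norm_upper:
  fixes N :: "'a::euclidean_space \<Rightarrow> real"
  assumes n: "is_norm N"
  obtains C where "C > 0" "\<And>x. N x \<le> C * norm x"
proof -
  define C where "C = (\<Sum>b\<in>Basis. N b) + 1"
  have C0: "(\<Sum>b\<in>Basis. N b) \<ge> 0" by (intro sum_nonneg is_norm_nonneg[OF n])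
  have "N x \<le> C * norm x" for x
  proof -
    have "N x = N (\<Sum>b\<in>Basis. (x \<bullet> b) *\<^sub>R b)" by (simp add: euclidean_representation)
    also have "\<dots> \<le> (\<Sum>b\<in>Basis. N ((x \<bullet> b) *\<^sub>R b))" by (rule is_norm_sum[OF n])
    also have "\<dots> = (\<Sum>b\<in>Basis. \<bar>x \<bullet> b\<bar> * N b)" using is_normD(2)[OF n] by simp
    also have "\<dots> \<le> (\<Sum>b\<in>Basis. norm x * N b)"
      by (intro sum_mono mult_right_mono is_norm_nonneg[OF n]) (simp add: Basis_le_norm)
    also have "\<dots> = norm x * (\<Sum>b\<in>Basis. N b)" by (simp add: sum_distrib_left)
    also have "\<dots> \<le> C * norm x" unfolding C_def by (simp add: algebra_simps)
    finally show ?thesis .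
  qed
  moreover have "C > 0" using C0 unfolding C_def by simp
  ultimately show ?thesis using that by blast
qed

lemma is_norm_lipschitz: "is_norm N \<Longrightarrow> \<bar>N x - N y\<bar> \<le> N (x - y)"
proof -
  assume n: "is_norm N"
  have "N x \<le> N (x - y) + N y" using is_normD(1)[OF n, of "x - y" y] by simp
  moreover have "N y \<le> N (y - x) + N x" using is_normD(1)[OF n, of "y - x" x] by simp
  ultimately show ?thesis using is_norm_commute[OF n, of x y] by linarith
qed

lemma is_norm_continuous:
  fixes N :: "'a::euclidean_space \<Rightarrow> real"
  assumes n: "is_norm N"
  shows "continuous_on S N"
proof -
  obtain C where C: "C > 0" "\<And>x. N x \<le> C * norm x" using is_norm_upper[OF n] by blast
  have "dist (N x) (N y) \<le> C * dist x y" for x y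
    using is_norm_lipschitz[OF n, of x y] C(2)[of "x - y"] by (simp add: dist_norm dist_real_def)
  then have "lipschitz_on C S N" unfolding lipschitz_on_def using C(1) by auto
  then show ?thesis by (rule lipschitz_on_continuous_on)
qed

lemma is_norm_lower:
  fixes N :: "'a::euclidean_space \<Rightarrow> real"
  assumes n: "is_norm N"
  obtains C where "C > 0" "\<And>x. norm x \<le> C * N x"
proof -
  have ne: "sphere (0::'a) 1 \<noteq> {}"
  proof -
    obtain b :: 'a where "b \<in> Basis" using nonempty_Basis by blast
    then show ?thesis by (auto intro!: exI[of _ b])
  qed
  obtain x0 where x0: "x0 \<in> sphere 0 1" "\<And>y. y \<in> sphere 0 1 \<Longrightarrow> N x0 \<le> N y"
    using continuous_attains_inf[OF compact_sphere ne is_norm_continuous[OF n]] by blast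
  have m: "N x0 > 0"
    using x0(1) is_normD(3)[OF n, of x0] is_norm_nonneg[OF n, of x0] by auto
  have "norm x \<le> (1 / N x0) * N x" for x
  proof (cases "x = 0")
    case True then show ?thesis by (simp add: is_norm_zero[OF n])
  next
    case False
    have "N x0 \<le> N ((1 / norm x) *\<^sub>R x)" using x0(2) False by simp
    also have "\<dots> = N x / norm x" using is_normD(2)[OF n] by simp
    finally show ?thesis using m False by (simp add: field_simps)
  qed
  then show ?thesis using that[of "1 / N x0"] m by auto
qed

lemma is_norm_unit_exists:
  fixes N :: "'a::euclidean_space \<Rightarrow> real"
  assumes n: "is_norm N"
  obtains x where "N x = 1"
proof -
  obtain b :: 'a where b: "b \<in> Basis" using nonempty_Basis by blast
  then have "b \<noteq> 0" by auto
  then have nb: "N b > 0" using is_normD(3)[OF n, of b] is_norm_nonneg[OF n, of b] by auto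
  have "N ((1 / N b) *\<^sub>R b) = 1" using is_normD(2)[OF n] nb by simp
  then show ?thesis using that by blast
qed

subsection \<open>Dual norm\<close>

lemma dual_norm_bdd:
  fixes N :: "'a::euclidean_space \<Rightarrow> real"
  assumes n: "is_norm N"
  obtains C where "C > 0" "\<And>y z. N y \<le> 1 \<Longrightarrow> y \<bullet> z \<le> C * norm z"
proof -
  obtain C where C: "C > 0" "\<And>x. norm x \<le> C * N x" using is_norm_lower[OF n] by blast
  have "y \<bullet> z \<le> C * norm z" if "N y \<le> 1" for y z
  proof -
    have "y \<bullet> z \<le> norm y * norm z" by (rule norm_cauchy_schwarz)
    also have "\<dots> \<le> (C * N y) * norm z" by (intro mult_right_mono C(2)) auto
    also have "\<dots> \<le> C * norm z" using that C(1) is_norm_nonneg[OF n, of y]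
      by (simp add: mult_left_le_one_le)
    finally show ?thesis .
  qed
  then show ?thesis using that C(1) by blast
qed

lemma dual_norm_set_bdd:
  fixes N :: "'a::euclidean_space \<Rightarrow> real"
  assumes n: "is_norm N"
  shows "bdd_above {y \<bullet> z | y. N y \<le> 1}"
proof -
  obtain C where C: "C > 0" "\<And>y z. N y \<le> 1 \<Longrightarrow> y \<bullet> z \<le> C * norm z" using dual_norm_bdd[OF n] by blast
  show ?thesis unfolding bdd_above_def using C(2) by blast
qed

lemma dual_norm_ge:
  fixes N :: "'a::euclidean_space \<Rightarrow> real"
  assumes n: "is_norm N" and "N y \<le> 1"
  shows "y \<bullet> z \<le> dual_norm N z"
  unfolding dual_norm_def using assms by (intro cSup_upper dual_norm_set_bdd) auto

lemma dual_norm_nonneg: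
  fixes N :: "'a::euclidean_space \<Rightarrow> real"
  assumes n: "is_norm N"
  shows "dual_norm N z \<ge> 0"
  using dual_norm_ge[OF n, of 0 z] is_norm_zero[OF n] by simp

lemma dual_norm_le:
  fixes N :: "'a::euclidean_space \<Rightarrow> real"
  assumes n: "is_norm N" and "\<And>y. N y \<le> 1 \<Longrightarrow> y \<bullet> z \<le> B"
  shows "dual_norm N z \<le> B"
  unfolding dual_norm_def
  apply (rule cSup_least)
  subgoal using is_norm_zero[OF n] by (auto intro!: exI[of _ 0])
  subgoal using assms(2) by auto
  done

lemma dual_norm_upper:
  fixes N :: "'a::euclidean_space \<Rightarrow> real"
  assumes n: "is_norm N"
  obtains C where "C > 0" "\<And>z. dual_norm N z \<le> C * norm z"
proof -
  obtain C where C: "C > 0" "\<And>y z. N y \<le> 1 \<Longrightarrow> y \<bullet> z \<le> C * norm z" using dual_norm_bdd[OF n] by blast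
  show ?thesis using that C by (meson dual_norm_le n)
qed

lemma dual_norm_inner:
  fixes N :: "'a::euclidean_space \<Rightarrow> real"
  assumes n: "is_norm N"
  shows "y \<bullet> z \<le> N y * dual_norm N z"
proof (cases "y = 0")
  case True then show ?thesis by (simp add: is_norm_zero[OF n])
next
  case False
  then have ny: "N y > 0" using is_normD(3)[OF n, of y] is_norm_nonneg[OF n, of y] by auto
  have "N ((1 / N y) *\<^sub>R y) \<le> 1" using is_normD(2)[OF n] ny by simp
  then have "((1 / N y) *\<^sub>R y) \<bullet> z \<le> dual_norm N z" by (rule dual_norm_ge[OF n])
  then show ?thesis using ny by (simp add: field_simps)
qed

lemma dual_norm_triangle:
  fixes N :: "'a::euclidean_space \<Rightarrow> real"
  assumes n: "is_norm N"
  shows "dual_norm N (z + w) \<le> dual_norm N z + dual_norm N w"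
proof (rule dual_norm_le[OF n])
  fix y assume "N y \<le> 1"
  then have "y \<bullet> z \<le> dual_norm N z" "y \<bullet> w \<le> dual_norm N w" using dual_norm_ge[OF n] by auto
  then show "y \<bullet> (z + w) \<le> dual_norm N z + dual_norm N w" by (simp add: inner_add_right)
qed

lemma dual_norm_scale_le:
  fixes N :: "'a::euclidean_space \<Rightarrow> real"
  assumes n: "is_norm N"
  shows "dual_norm N (a *\<^sub>R z) \<le> \<bar>a\<bar> * dual_norm N z"
proof (rule dual_norm_le[OF n])
  fix y assume y: "N y \<le> 1"
  show "y \<bullet> (a *\<^sub>R z) \<le> \<bar>a\<bar> * dual_norm N z"
  proof (cases "a \<ge> 0")
    case True
    then show ?thesis using dual_norm_ge[OF n y, of z] by (simp add: mult_left_mono)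
  next
    case False
    have "N (- y) \<le> 1" using y is_norm_minus[OF n] by simp
    then have "(- y) \<bullet> z \<le> dual_norm N z" by (rule dual_norm_ge[OF n])
    then have "\<bar>a\<bar> * ((- y) \<bullet> z) \<le> \<bar>a\<bar> * dual_norm N z" by (rule mult_left_mono) simp
    moreover have "y \<bullet> (a *\<^sub>R z) = \<bar>a\<bar> * ((- y) \<bullet> z)" using False by simp
    ultimately show ?thesis by simp
  qed
qed

lemma dual_norm_scale:
  fixes N :: "'a::euclidean_space \<Rightarrow> real"
  assumes n: "is_norm N"
  shows "dual_norm N (a *\<^sub>R z) = \<bar>a\<bar> * dual_norm N z"
proof (cases "a = 0")
  case True
  then show ?thesis using dual_norm_scale_le[OF n, of 0 z] dual_norm_nonneg[OF n, of 0] by simp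
next
  case False
  have "dual_norm N z = dual_norm N ((1/a) *\<^sub>R (a *\<^sub>R z))" using False by simp
  also have "\<dots> \<le> \<bar>1/a\<bar> * dual_norm N (a *\<^sub>R z)" by (rule dual_norm_scale_le[OF n])
  finally have "\<bar>a\<bar> * dual_norm N z \<le> dual_norm N (a *\<^sub>R z)"
    using False by (simp add: field_simps abs_divide)
  then show ?thesis using dual_norm_scale_le[OF n, of a z] by linarith
qed

lemma dual_norm_minus:
  fixes N :: "'a::euclidean_space \<Rightarrow> real"
  assumes n: "is_norm N"
  shows "dual_norm N (z - w) = dual_norm N (w - z)"
  using dual_norm_scale[OF n, of "-1" "z - w"] by simp

lemma dual_norm_diff:
  fixes N :: "'a::euclidean_space \<Rightarrow> real"
  assumes n: "is_norm N"
  shows "dual_norm N (z - w) \<le> dual_norm N z + dual_norm N w"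
  using dual_norm_triangle[OF n, of z "-w"] dual_norm_scale[OF n, of "-1" w] by simp

context
  fixes N :: "real^'n \<Rightarrow> real"
  assumes n: "is_norm N"
begin

lemma ind_set_bdd: "bdd_above {N (A *v x) | x. N x = 1}"
proof -
  obtain C where C: "C > 0" "\<And>x. N x \<le> C * norm x" using is_norm_upper[OF n] by blast
  obtain C' where C': "C' > 0" "\<And>x. norm x \<le> C' * N x" using is_norm_lower[OF n] by blast
  have "N (A *v x) \<le> C * (onorm ((*v) A) * C')" if "N x = 1" for x
  proof -
    have "N (A *v x) \<le> C * norm (A *v x)" by (rule C(2))
    also have "\<dots> \<le> C * (onorm ((*v) A) * norm x)"
      by (intro mult_left_mono onorm matrix_vector_mul_bounded_linear) (use C in auto)
    also have "\<dots> \<le> C * (onorm ((*v) A) * C')"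
      using C'(2)[of x] that C(1) onorm_pos_le[OF matrix_vector_mul_bounded_linear, of A]
      by (intro mult_left_mono mult_left_mono) auto
    finally show ?thesis .
  qed
  then show ?thesis unfolding bdd_above_def by blast
qed

lemma ind_ge: "N x = 1 \<Longrightarrow> N (A *v x) \<le> induced_norm N A"
  unfolding induced_norm_def by (intro cSup_upper ind_set_bdd) auto

lemma ind_nonneg: "induced_norm N A \<ge> 0"
proof -
  obtain x where "N x = 1" using is_norm_unit_exists[OF n] by blast
  then show ?thesis using ind_ge[of x A] is_norm_nonneg[OF n, of "A *v x"] by linarith
qed

lemma ind_le: "(\<And>x. N x = 1 \<Longrightarrow> N (A *v x) \<le> B) \<Longrightarrow> induced_norm N A \<le> B"
  unfolding induced_norm_def
  apply (rule cSup_least)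
  subgoal using is_norm_unit_exists[OF n] by blast
  subgoal by auto
  done

lemma ind_bound: "N (A *v x) \<le> induced_norm N A * N x"
proof (cases "x = 0")
  case True then show ?thesis by (simp add: is_norm_zero[OF n])
next
  case False
  then have nx: "N x > 0" using is_normD(3)[OF n, of x] is_norm_nonneg[OF n, of x] by auto
  have "N ((1 / N x) *\<^sub>R x) = 1" using is_normD(2)[OF n] nx by simp
  then have "N (A *v ((1 / N x) *\<^sub>R x)) \<le> induced_norm N A" by (rule ind_ge)
  moreover have "A *v ((1 / N x) *\<^sub>R x) = (1 / N x) *\<^sub>R (A *v x)"
    by (simp add: matrix_vector_mult_scaleR)
  ultimately have "N (A *v x) / N x \<le> induced_norm N A" using is_normD(2)[OF n] nx by simp
  then show ?thesis using nx by (simp add: field_simps)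
qed

lemma ind_add: "induced_norm N (A + B) \<le> induced_norm N A + induced_norm N B"
proof (rule ind_le)
  fix x assume x: "N x = 1"
  have "N ((A + B) *v x) \<le> N (A *v x) + N (B *v x)"
    using is_normD(1)[OF n] by (simp add: matrix_vector_mult_add_rdistrib)
  then show "N ((A + B) *v x) \<le> induced_norm N A + induced_norm N B"
    using ind_ge[OF x, of A] ind_ge[OF x, of B] by linarith
qed

lemma ind_scale: "induced_norm N (r *\<^sub>R A) \<le> \<bar>r\<bar> * induced_norm N A"
proof (rule ind_le)
  fix x assume x: "N x = 1"
  have "N ((r *\<^sub>R A) *v x) = \<bar>r\<bar> * N (A *v x)"
    using is_normD(2)[OF n] by (simp add: scaleR_matrix_vector_assoc[symmetric])
  then show "N ((r *\<^sub>R A) *v x) \<le> \<bar>r\<bar> * induced_norm N A"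
    using ind_ge[OF x, of A] by (simp add: mult_left_mono)
qed

lemma ind_id: "induced_norm N (mat 1) = 1"
proof -
  obtain x where x: "N x = 1" using is_norm_unit_exists[OF n] by blast
  have "induced_norm N (mat 1) \<le> 1" by (rule ind_le) simp
  moreover have "1 \<le> induced_norm N (mat 1)" using ind_ge[OF x, of "mat 1"] x by simp
  ultimately show ?thesis by simp
qed

definition lnq :: "real^'n^'n \<Rightarrow> real \<Rightarrow> real" where
  "lnq A h = (induced_norm N (mat 1 + h *\<^sub>R A) - 1) / h"

lemma lnq_mono:
  assumes "0 < h1" "h1 \<le> h2"
  shows "lnq A h1 \<le> lnq A h2"
proof -
  define s where "s = h1 / h2"
  have s: "0 < s" "s \<le> 1" using assms unfolding s_def by auto
  have eq: "mat 1 + h1 *\<^sub>R A = s *\<^sub>R (mat 1 + h2 *\<^sub>R A) + (1 - s) *\<^sub>R mat 1"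
    using assms unfolding s_def by (simp add: algebra_simps)
  have "induced_norm N (mat 1 + h1 *\<^sub>R A) \<le> induced_norm N (s *\<^sub>R (mat 1 + h2 *\<^sub>R A)) + induced_norm N ((1 - s) *\<^sub>R mat 1)"
    unfolding eq by (rule ind_add)
  also have "\<dots> \<le> s * induced_norm N (mat 1 + h2 *\<^sub>R A) + (1 - s) * 1"
    using ind_scale[of s "mat 1 + h2 *\<^sub>R A"] ind_scale[of "1 - s" "mat 1"] s ind_id by simp
  finally have "induced_norm N (mat 1 + h1 *\<^sub>R A) - 1 \<le> s * (induced_norm N (mat 1 + h2 *\<^sub>R A) - 1)"
    by (simp add: algebra_simps)
  then have "(induced_norm N (mat 1 + h1 *\<^sub>R A) - 1) / h1 \<le> s * (induced_norm N (mat 1 + h2 *\<^sub>R A) - 1) / h1"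
    using assms by (simp add: divide_right_mono)
  also have "\<dots> = (induced_norm N (mat 1 + h2 *\<^sub>R A) - 1) / h2"
    using assms unfolding s_def by simp
  finally show ?thesis unfolding lnq_def .
qed

lemma lnq_lower:
  assumes "0 < h"
  shows "- induced_norm N A \<le> lnq A h"
proof -
  obtain x where x: "N x = 1" using is_norm_unit_exists[OF n] by blast
  have "x = (mat 1 + h *\<^sub>R A) *v x - h *\<^sub>R (A *v x)"
    by (simp add: matrix_vector_mult_add_rdistrib scaleR_matrix_vector_assoc)
  then have "N x \<le> N ((mat 1 + h *\<^sub>R A) *v x) + N (h *\<^sub>R (A *v x))"
    using is_norm_diff[OF n] by metis
  also have "\<dots> \<le> induced_norm N (mat 1 + h *\<^sub>R A) + h * induced_norm N A"
    using ind_ge[OF x] is_normD(2)[OF n] assms by (simp add: add_mono mult_left_mono)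
  finally have "1 - induced_norm N (mat 1 + h *\<^sub>R A) \<le> h * induced_norm N A" using x by simp
  then show ?thesis unfolding lnq_def using assms by (simp add: field_simps)
qed

lemma lnq_tendsto: "(lnq A \<longlongrightarrow> Inf (lnq A ` {0<..})) (at_right 0)"
proof -
  let ?I = "Inf (lnq A ` {0<..})"
  have bdd: "bdd_below (lnq A ` {0<..})"
    unfolding bdd_below_def using lnq_lower by auto
  have le: "?I \<le> lnq A h" if "0 < h" for h
    using that bdd by (intro cInf_lower) auto
  show ?thesis
  proof (rule order_tendstoI)
    fix y assume "y < ?I"
    note yl = this
    show "\<forall>\<^sub>F x in at_right 0. y < lnq A x"
      by (rule eventually_mono[OF eventually_at_right_less]) (rule less_le_trans[OF yl le])
  next
    fix y assume "?I < y"
    then obtain h0 where h0: "h0 > 0" "lnq A h0 < y"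
      using cInf_lessD[of "lnq A ` {0<..}" y] by auto
    have "\<forall>\<^sub>F x in at_right 0. x \<in> {0<..<h0}" using h0(1) by (rule eventually_at_right_real)
    then show "\<forall>\<^sub>F x in at_right 0. lnq A x < y"
    proof (rule eventually_mono)
      fix x :: real assume "x \<in> {0<..<h0}"
      then show "lnq A x < y" using lnq_mono[of x h0 A] h0 by simp
    qed
  qed
qed

lemma log_norm_eq: "log_norm N A = Inf (lnq A ` {0<..})"
proof -
  have "log_norm N A = Lim (at_right 0) (lnq A)"
    unfolding log_norm_def lnq_def by simp
  also have "\<dots> = Inf (lnq A ` {0<..})"
    by (rule tendsto_Lim[OF _ lnq_tendsto]) simp
  finally show ?thesis .
qed

lemma log_norm_eventually:
  assumes "log_norm N A \<le> - c" "\<epsilon> > 0"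
  shows "\<forall>\<^sub>F h in at_right 0. induced_norm N (mat 1 + h *\<^sub>R A) \<le> 1 + h * (- c + \<epsilon>)"
proof -
  have "\<forall>\<^sub>F h in at_right 0. lnq A h < - c + \<epsilon>"
    using lnq_tendsto[of A] assms unfolding log_norm_eq[symmetric]
    by (intro order_tendstoD(2)) auto
  moreover have "\<forall>\<^sub>F x in at_right (0::real). 0 < x" by (rule eventually_at_right_less)
  ultimately show ?thesis
  proof eventually_elim
    case (elim h) then show ?case unfolding lnq_def by (simp add: field_simps)
  qed
qed

end

lemma onorm_matrix_le: "onorm ((*v) (M::real^'n^'m)) \<le> real CARD('m) * real CARD('n) * norm M"
proof (rule onorm_le_matrix_component)
  fix i j
  have "\<bar>M $ i $ j\<bar> \<le> norm (M $ i)" by (rule component_le_norm_cart)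
  also have "\<dots> \<le> norm M" by (rule Finite_Cartesian_Product.norm_nth_le)
  finally show "\<bar>M $ i $ j\<bar> \<le> norm M" .
qed

lemma inner_vmul: "(y::real^'n) \<bullet> (z v* A) = z \<bullet> (A *v y)"
  by (metis dot_lmul_matrix inner_commute)

lemma dual_transpose_bound:
  fixes N :: "real^'n \<Rightarrow> real"
  assumes n: "is_norm N"
  shows "dual_norm N (z + h *\<^sub>R (transpose A *v z)) \<le> induced_norm N (mat 1 + h *\<^sub>R A) * dual_norm N z"
proof (rule dual_norm_le[OF n])
  fix y assume y: "N y \<le> 1"
  have "y \<bullet> (z + h *\<^sub>R (transpose A *v z)) = ((mat 1 + h *\<^sub>R A) *v y) \<bullet> z"
    by (simp add: matrix_vector_mult_add_rdistrib scaleR_matrix_vector_assoc[symmetric]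
        inner_add_left inner_add_right inner_vmul inner_commute)
  also have "\<dots> \<le> N ((mat 1 + h *\<^sub>R A) *v y) * dual_norm N z" by (rule dual_norm_inner[OF n])
  also have "\<dots> \<le> (induced_norm N (mat 1 + h *\<^sub>R A) * N y) * dual_norm N z"
    by (intro mult_right_mono ind_bound[OF n] dual_norm_nonneg[OF n])
  also have "\<dots> \<le> induced_norm N (mat 1 + h *\<^sub>R A) * dual_norm N z"
    using y ind_nonneg[OF n] dual_norm_nonneg[OF n] is_norm_nonneg[OF n, of y]
    by (intro mult_right_mono) (auto simp: mult_left_le)
  finally show "y \<bullet> (z + h *\<^sub>R (transpose A *v z)) \<le> induced_norm N (mat 1 + h *\<^sub>R A) * dual_norm N z" .
qed

lemma osl:
  fixes N :: "real^'n \<Rightarrow> real" and g :: "real^'n \<Rightarrow> real^'n" and A :: "real^'n \<Rightarrow> real^'n^'n"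
  assumes n: "is_norm N"
    and der: "\<And>z. (g has_derivative (\<lambda>v. A z *v v)) (at z)"
    and cont: "continuous_on UNIV A"
    and ln: "\<And>z. log_norm N (A z) \<le> - c"
    and eps: "\<epsilon> > 0"
  shows "\<forall>\<^sub>F h in at_right 0. N ((x - y) + h *\<^sub>R (g x - g y)) \<le> N (x - y) + h * (- c * N (x - y) + \<epsilon>)"
proof (cases "x = y")
  case True
  show ?thesis
    by (rule eventually_mono[OF eventually_at_right_less]) (use True eps is_norm_zero[OF n] in simp)
next
  case False
  define e where "e = x - y"
  have ene: "e \<noteq> 0" using False unfolding e_def by simp
  define ne where "ne = norm e"
  have ne: "ne > 0" using ene unfolding ne_def by simp
  have Ne: "N e > 0" using ene is_normD(3)[OF n, of e] is_norm_nonneg[OF n, of e] by auto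
  obtain C where C: "C > 0" "\<And>x. N x \<le> C * norm x" using is_norm_upper[OF n] by blast
  define K0 where "K0 = C * ne * (real CARD('n) * real CARD('n))"
  have K0: "K0 \<ge> 0" unfolding K0_def using C ne by simp
  define \<eta> where "\<eta> = \<epsilon> / (2 * (K0 + 1))"
  have \<eta>: "\<eta> > 0" unfolding \<eta>_def using eps K0 by simp
  have K0\<eta>: "K0 * \<eta> \<le> \<epsilon> / 2"
    unfolding \<eta>_def using eps K0 by (simp add: field_simps)
  define S where "S = closed_segment y x"
  have "uniformly_continuous_on S A"
    unfolding S_def by (intro compact_uniformly_continuous continuous_on_subset[OF cont]) auto
  then obtain \<rho> where \<rho>: "\<rho> > 0" "\<And>z z'. z \<in> S \<Longrightarrow> z' \<in> S \<Longrightarrow> dist z' z < \<rho> \<Longrightarrow> dist (A z') (A z) < \<eta>"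
    unfolding uniformly_continuous_on_def using \<eta> by metis
  define m :: nat where "m = nat (ceiling (ne / \<rho>)) + 1"
  have m: "m \<ge> 1" unfolding m_def by simp
  have mr: "ne / real m < \<rho>"
  proof -
    have "ne / \<rho> < real m" unfolding m_def by linarith
    then have "ne < real m * \<rho>" using \<rho>(1) by (simp add: field_simps)
    then show ?thesis using m by (simp add: field_simps)
  qed
  define p where "p j = y + (real j / real m) *\<^sub>R e" for j :: nat
  have p0: "p 0 = y" unfolding p_def by simp
  have pm: "p m = x" unfolding p_def e_def using m by simp
  have pS: "p j \<in> S" if "j \<le> m" for j
  proof -
    have "p j = (1 - real j / real m) *\<^sub>R y + (real j / real m) *\<^sub>R x"
      unfolding p_def e_def by (simp add: algebra_simps)
    then show ?thesis unfolding S_def in_segment using that m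
      by (intro exI[of _ "real j / real m"]) auto
  qed
  have pd: "p (Suc j) - p j = (1 / real m) *\<^sub>R e" for j
    unfolding p_def by (simp add: algebra_simps add_divide_distrib)
  define err where "err j = g (p (Suc j)) - g (p j) - A (p j) *v ((1 / real m) *\<^sub>R e)" for j
  have err: "norm (err j) \<le> ne / real m * (real CARD('n) * real CARD('n) * \<eta>)" if j: "j < m" for j
  proof -
    define S' where "S' = closed_segment (p j) (p (Suc j))"
    have S'S: "S' \<subseteq> S" unfolding S'_def using pS j
      by (intro closed_segment_subset) (auto simp: S_def)
    have "norm (g (p (Suc j)) - g (p j) - A (p j) *v (p (Suc j) - p j))
           \<le> norm (p (Suc j) - p j) * (real CARD('n) * real CARD('n) * \<eta>)"
    proof (rule differentiable_bound_linearization[where S=S' and f'="\<lambda>z v. A z *v v"])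
      fix t :: real assume "t \<in> {0..1}"
      then show "p j + t *\<^sub>R (p (Suc j) - p j) \<in> S'" unfolding S'_def in_segment
        by (intro exI[of _ t]) (auto simp: algebra_simps)
    next
      fix z assume "z \<in> S'"
      show "(g has_derivative (\<lambda>v. A z *v v)) (at z within S')"
        by (rule has_derivative_at_withinI[OF der])
    next
      fix z assume z: "z \<in> S'"
      have "dist z (p j) \<le> dist (p (Suc j)) (p j)"
        using z unfolding S'_def
        by (metis dist_commute dist_in_closed_segment)
      also have "\<dots> = ne / real m" using pd[of j] unfolding dist_norm ne_def by simp
      finally have "dist z (p j) < \<rho>" using mr by linarith
      then have d: "dist (A z) (A (p j)) < \<eta>" using \<rho>(2)[of "p j" z] pS[of j] z S'S j by auto
      have "(\<lambda>v. A z *v v) - (\<lambda>v. A (p j) *v v) = (*v) (A z - A (p j))"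
        by (auto simp: fun_diff_def matrix_vector_mult_diff_rdistrib)
      then have "onorm ((\<lambda>v. A z *v v) - (\<lambda>v. A (p j) *v v)) \<le> real CARD('n) * real CARD('n) * norm (A z - A (p j))"
        using onorm_matrix_le by metis
      also have "\<dots> \<le> real CARD('n) * real CARD('n) * \<eta>"
        using d by (intro mult_left_mono) (auto simp: dist_norm)
      finally show "onorm ((\<lambda>v. A z *v v) - (\<lambda>v. A (p j) *v v)) \<le> real CARD('n) * real CARD('n) * \<eta>" .
    next
      show "p j \<in> S'" unfolding S'_def by simp
    qed
    then show ?thesis unfolding err_def pd ne_def using m by simp
  qed
  define \<epsilon>' where "\<epsilon>' = \<epsilon> / (2 * N e)"
  have \<epsilon>': "\<epsilon>' > 0" "\<epsilon>' * N e = \<epsilon> / 2" unfolding \<epsilon>'_def using eps Ne by auto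
  have ev: "\<forall>\<^sub>F h in at_right 0. \<forall>j\<in>{..<m}. induced_norm N (mat 1 + h *\<^sub>R A (p j)) \<le> 1 + h * (- c + \<epsilon>')"
    by (intro eventually_ball_finite ballI log_norm_eventually[OF n ln \<epsilon>'(1)]) auto
  show ?thesis
  proof (rule eventually_mono[OF eventually_conj[OF ev eventually_at_right_less]])
    fix h :: real assume h: "(\<forall>j\<in>{..<m}. induced_norm N (mat 1 + h *\<^sub>R A (p j)) \<le> 1 + h * (- c + \<epsilon>')) \<and> 0 < h"
    have sume: "(\<Sum>j<m. (1 / real m) *\<^sub>R e) = e"
    proof -
      have "(\<Sum>j<m. (1 / real m) *\<^sub>R e) = (\<Sum>j<m. 1 / real m) *\<^sub>R e" by (rule scaleR_sum_left[symmetric])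
      also have "\<dots> = e" using m by simp
      finally show ?thesis .
    qed
    have sumg: "(\<Sum>j<m. g (p (Suc j)) - g (p j)) = g x - g y"
      using sum_lessThan_telescope[of "\<lambda>j. g (p j)" m] p0 pm by simp
    have "(\<Sum>j<m. (1 / real m) *\<^sub>R e + h *\<^sub>R (g (p (Suc j)) - g (p j)))
        = (\<Sum>j<m. (1 / real m) *\<^sub>R e) + h *\<^sub>R (\<Sum>j<m. g (p (Suc j)) - g (p j))"
      by (simp only: sum.distrib scaleR_sum_right)
    then have "e + h *\<^sub>R (g x - g y) = (\<Sum>j<m. (1 / real m) *\<^sub>R e + h *\<^sub>R (g (p (Suc j)) - g (p j)))"
      unfolding sume sumg by simp
    also have "\<dots> = (\<Sum>j<m. (mat 1 + h *\<^sub>R A (p j)) *v ((1 / real m) *\<^sub>R e) + h *\<^sub>R err j)"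
      by (intro sum.cong refl) (simp add: err_def matrix_vector_mult_add_rdistrib
          scaleR_matrix_vector_assoc[symmetric] algebra_simps)
    finally have eq: "e + h *\<^sub>R (g x - g y) = \<dots>" .
    have "N (e + h *\<^sub>R (g x - g y)) \<le> (\<Sum>j<m. N ((mat 1 + h *\<^sub>R A (p j)) *v ((1 / real m) *\<^sub>R e) + h *\<^sub>R err j))"
      unfolding eq by (rule is_norm_sum[OF n])
    also have "\<dots> \<le> (\<Sum>j<m. (1 + h * (- c + \<epsilon>')) * (N e / real m) + h * (C * (ne / real m * (real CARD('n) * real CARD('n) * \<eta>))))"
    proof (rule sum_mono)
      fix j assume j: "j \<in> {..<m}"
      have "N ((mat 1 + h *\<^sub>R A (p j)) *v ((1 / real m) *\<^sub>R e) + h *\<^sub>R err j)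
          \<le> N ((mat 1 + h *\<^sub>R A (p j)) *v ((1 / real m) *\<^sub>R e)) + N (h *\<^sub>R err j)"
        by (rule is_normD(1)[OF n])
      also have "N ((mat 1 + h *\<^sub>R A (p j)) *v ((1 / real m) *\<^sub>R e)) \<le> induced_norm N (mat 1 + h *\<^sub>R A (p j)) * N ((1 / real m) *\<^sub>R e)"
        by (rule ind_bound[OF n])
      also have "N ((1 / real m) *\<^sub>R e) = N e / real m" using is_normD(2)[OF n] by simp
      also have "induced_norm N (mat 1 + h *\<^sub>R A (p j)) * (N e / real m) \<le> (1 + h * (- c + \<epsilon>')) * (N e / real m)"
        using h j Ne m by (intro mult_right_mono) auto
      also have "N (h *\<^sub>R err j) \<le> h * (C * norm (err j))"
        using is_normD(2)[OF n] C(2)[of "err j"] h by (simp add: mult_left_mono)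
      also have "\<dots> \<le> h * (C * (ne / real m * (real CARD('n) * real CARD('n) * \<eta>)))"
        using err[of j] j h C(1) by (intro mult_left_mono) auto
      finally show "N ((mat 1 + h *\<^sub>R A (p j)) *v ((1 / real m) *\<^sub>R e) + h *\<^sub>R err j)
          \<le> (1 + h * (- c + \<epsilon>')) * (N e / real m) + h * (C * (ne / real m * (real CARD('n) * real CARD('n) * \<eta>)))"
        by simp
    qed
    also have "\<dots> = (1 + h * (- c + \<epsilon>')) * N e + h * (K0 * \<eta>)"
      using m unfolding K0_def by (simp add: field_simps)
    also have "\<dots> = N e + h * (- c * N e) + h * (\<epsilon>' * N e) + h * (K0 * \<eta>)"
      by (simp add: algebra_simps)
    also have "\<dots> \<le> N e + h * (- c * N e + \<epsilon>)"
    proof -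
      have "\<epsilon>' * N e + K0 * \<eta> \<le> \<epsilon>" using \<epsilon>'(2) K0\<eta> by linarith
      then have "h * (\<epsilon>' * N e + K0 * \<eta>) \<le> h * \<epsilon>" using h by (simp add: mult_left_mono)
      then show ?thesis by (simp add: algebra_simps)
    qed
    finally show "N ((x - y) + h *\<^sub>R (g x - g y)) \<le> N (x - y) + h * (- c * N (x - y) + \<epsilon>)"
      unfolding e_def .
  qed
qed

lemma step_right:
  fixes c K \<epsilon> h t Nt Ns Nr :: real
  assumes c: "c > 0" and h: "h \<ge> 0" "c * h \<le> 1" and K: "K \<ge> 0" and Nt: "Nt \<ge> 0"
    and Ns: "Ns \<le> Nt + h * (- c * Nt + K + \<epsilon>) + Nr" and r: "h * \<epsilon> + Nr \<ge> 0"
  shows "exp (c * (t + h)) * (Ns - K / c) - exp (c * t) * (Nt - K / c)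
          \<le> exp (c * t) * (K * c * h\<^sup>2) + exp (c * (t + h)) * (h * \<epsilon> + Nr)"
proof -
  define X where "X = exp (c * h)"
  have et: "exp (c * (t + h)) = exp (c * t) * X" unfolding X_def by (simp add: distrib_left exp_add)
  have e1: "(1 - c * h) * (Nt - K / c) = Nt + h * (- c * Nt + K) - K / c"
    using c by (simp add: field_simps)
  have s1: "Ns - K / c \<le> (1 - c * h) * (Nt - K / c) + (h * \<epsilon> + Nr)"
    using Ns e1 by (simp add: algebra_simps)
  have X2: "X * (1 - c * h) \<le> 1"
  proof -
    have "1 - c * h \<le> exp (- (c * h))" using exp_ge_add_one_self[of "- (c * h)"] by simp
    then have "X * (1 - c * h) \<le> X * exp (- (c * h))" unfolding X_def by (simp add: mult_left_mono)
    also have "\<dots> = 1" unfolding X_def by (simp add: exp_minus)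
    finally show ?thesis .
  qed
  have X3: "X * (1 - c * h) \<ge> 1 - (c * h)\<^sup>2"
  proof -
    have "1 + c * h \<le> X" unfolding X_def by (rule exp_ge_add_one_self)
    then have "(1 + c * h) * (1 - c * h) \<le> X * (1 - c * h)" using h by (simp add: mult_right_mono)
    then show ?thesis by (simp add: power2_eq_square algebra_simps)
  qed
  have Xp: "X > 0" unfolding X_def by simp
  have "exp (c * (t + h)) * (Ns - K / c) \<le> exp (c * t) * X * ((1 - c * h) * (Nt - K / c) + (h * \<epsilon> + Nr))"
    unfolding et by (intro mult_left_mono s1) (use Xp in simp)
  also have "\<dots> = exp (c * t) * ((X * (1 - c * h) - 1) * Nt + (1 - X * (1 - c * h)) * (K / c))
      + exp (c * t) * (Nt - K / c) + exp (c * t) * X * (h * \<epsilon> + Nr)"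
    by (simp add: algebra_simps)
  also have "(X * (1 - c * h) - 1) * Nt + (1 - X * (1 - c * h)) * (K / c) \<le> 0 + (c * h)\<^sup>2 * (K / c)"
  proof (rule add_mono)
    show "(X * (1 - c * h) - 1) * Nt \<le> 0" using X2 Nt by (simp add: mult_nonpos_nonneg)
    show "(1 - X * (1 - c * h)) * (K / c) \<le> (c * h)\<^sup>2 * (K / c)"
      using X3 K c by (intro mult_right_mono) auto
  qed
  also have "(0::real) + (c * h)\<^sup>2 * (K / c) = K * c * h\<^sup>2" using c by (simp add: power2_eq_square field_simps)
  finally show ?thesis using et by (simp add: mult_left_mono algebra_simps)
qed

lemma step_left:
  fixes c K \<epsilon> h t Nt Ns Nr B :: real
  assumes c: "c > 0" and h: "h \<ge> 0" and K: "K \<ge> 0" and Ns: "Ns \<ge> 0" "Ns \<le> B"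
    and Nt: "Nt * (1 + c * h) \<le> Ns + h * (K + \<epsilon>) + Nr" and r: "h * \<epsilon> + Nr \<ge> 0"
  shows "exp (c * t) * (Nt - K / c) - exp (c * (t - h)) * (Ns - K / c)
          \<le> exp (c * t) * (B * (c * h)\<^sup>2 + (h * \<epsilon> + Nr))"
proof -
  define x where "x = c * h"
  have x: "x \<ge> 0" unfolding x_def using c h by simp
  define Y where "Y = exp (- x)"
  have et: "exp (c * (t - h)) = exp (c * t) * Y" unfolding Y_def x_def
    by (simp add: right_diff_distrib exp_diff exp_minus field_simps)
  have Nt': "Nt \<le> (Ns + h * K + (h * \<epsilon> + Nr)) / (1 + x)"
    using Nt x unfolding x_def by (simp add: field_simps)
  have hx: "(K / c) * x = h * K" using c unfolding x_def by simp
  have eq: "(Ns + h * K + (h * \<epsilon> + Nr)) / (1 + x) - K / c = (Ns - K / c) / (1 + x) + (h * \<epsilon> + Nr) / (1 + x)"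
  proof -
    have "(Ns + h * K + (h * \<epsilon> + Nr)) / (1 + x) - K / c = (Ns + h * K + (h * \<epsilon> + Nr) - (K / c) * (1 + x)) / (1 + x)"
      using x by (simp add: diff_divide_distrib)
    also have "\<dots> = (Ns - K / c + (h * \<epsilon> + Nr)) / (1 + x)"
    proof -
      have "Ns + h * K + (h * \<epsilon> + Nr) - (K / c) * (1 + x) = Ns - K / c + (h * \<epsilon> + Nr)"
        using hx by (simp add: distrib_left)
      then show ?thesis by simp
    qed
    also have "\<dots> = (Ns - K / c) / (1 + x) + (h * \<epsilon> + Nr) / (1 + x)" by (simp add: add_divide_distrib)
    finally show ?thesis .
  qed
  have a1: "(h * \<epsilon> + Nr) / (1 + x) \<le> h * \<epsilon> + Nr"
  proof -
    have "0 \<le> (h * \<epsilon> + Nr) * x" using r x by simp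
    then show ?thesis using x by (simp add: divide_le_eq algebra_simps)
  qed
  have Y1: "Y \<le> 1 / (1 + x)"
  proof -
    have "1 + x \<le> exp x" by (rule exp_ge_add_one_self)
    then have "1 / exp x \<le> 1 / (1 + x)" using x by (intro divide_left_mono) auto
    then show ?thesis unfolding Y_def by (simp add: exp_minus field_simps)
  qed
  have Y2: "1 / (1 + x) - Y \<le> x\<^sup>2"
  proof -
    have "1 - x \<le> Y" unfolding Y_def using exp_ge_add_one_self[of "-x"] by simp
    moreover have "1 / (1 + x) \<le> 1 - x + x\<^sup>2"
    proof -
      have "1 \<le> (1 - x + x\<^sup>2) * (1 + x)" using x by (simp add: power2_eq_square algebra_simps)
      then show ?thesis using x by (simp add: divide_le_eq)
    qed
    ultimately show ?thesis by simp
  qed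
  have br: "Nt - K / c - Y * (Ns - K / c) \<le> B * x\<^sup>2 + (h * \<epsilon> + Nr)"
  proof -
    have "Nt - K / c \<le> (Ns - K / c) / (1 + x) + (h * \<epsilon> + Nr)" using Nt' eq a1 by linarith
    then have "Nt - K / c - Y * (Ns - K / c) \<le> Ns * (1 / (1 + x) - Y) - (K / c) * (1 / (1 + x) - Y) + (h * \<epsilon> + Nr)"
      by (simp add: algebra_simps diff_divide_distrib)
    also have "\<dots> \<le> Ns * (1 / (1 + x) - Y) + (h * \<epsilon> + Nr)"
    proof -
      have "(K / c) * (1 / (1 + x) - Y) \<ge> 0" using K c Y1 by simp
      then show ?thesis by simp
    qed
    also have "\<dots> \<le> B * x\<^sup>2 + (h * \<epsilon> + Nr)"
    proof -
      have "Ns * (1 / (1 + x) - Y) \<le> B * x\<^sup>2" using Ns Y1 Y2 by (intro mult_mono) auto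
      then show ?thesis by simp
    qed
    finally show ?thesis .
  qed
  have "exp (c * t) * (Nt - K / c) - exp (c * (t - h)) * (Ns - K / c) = exp (c * t) * (Nt - K / c - Y * (Ns - K / c))"
    unfolding et by (simp add: algebra_simps)
  also have "\<dots> \<le> exp (c * t) * (B * x\<^sup>2 + (h * \<epsilon> + Nr))" using br by (simp add: mult_left_mono)
  finally show ?thesis unfolding x_def .
qed

lemma conv_left:
  fixes Nn :: "'a::real_vector \<Rightarrow> real"
  assumes tri: "\<And>x y. Nn (x + y) \<le> Nn x + Nn y" and hom: "\<And>r x. Nn (r *\<^sub>R x) = \<bar>r\<bar> * Nn x"
    and \<tau>: "\<tau> > 0" and h: "h \<ge> 0" and loc: "Nn (v + \<tau> *\<^sub>R w) \<le> Nn v + \<tau> * D"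
  shows "Nn v \<le> Nn (v - h *\<^sub>R w) + h * D"
proof -
  have "(\<tau> + h) *\<^sub>R v = \<tau> *\<^sub>R (v - h *\<^sub>R w) + h *\<^sub>R (v + \<tau> *\<^sub>R w)" by (simp add: algebra_simps)
  moreover have "Nn ((\<tau> + h) *\<^sub>R v) = (\<tau> + h) * Nn v" using hom \<tau> h by simp
  moreover have "Nn (\<tau> *\<^sub>R (v - h *\<^sub>R w)) = \<tau> * Nn (v - h *\<^sub>R w)" using hom \<tau> by simp
  moreover have "Nn (h *\<^sub>R (v + \<tau> *\<^sub>R w)) = h * Nn (v + \<tau> *\<^sub>R w)" using hom h by simp
  ultimately have "(\<tau> + h) * Nn v \<le> \<tau> * Nn (v - h *\<^sub>R w) + h * Nn (v + \<tau> *\<^sub>R w)"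
    using tri[of "\<tau> *\<^sub>R (v - h *\<^sub>R w)" "h *\<^sub>R (v + \<tau> *\<^sub>R w)"] by metis
  also have "\<dots> \<le> \<tau> * Nn (v - h *\<^sub>R w) + h * (Nn v + \<tau> * D)" using loc h by (simp add: mult_left_mono)
  finally have "\<tau> * Nn v \<le> \<tau> * (Nn (v - h *\<^sub>R w) + h * D)" by (simp add: algebra_simps)
  then show ?thesis using \<tau> by simp
qed

lemma henstock_sub:
  fixes F :: "real \<Rightarrow> 'a::euclidean_space"
  assumes p: "p tagged_division_of {a..b}" and fine: "\<gamma> fine p"
    and H: "\<And>q. q tagged_partial_division_of cbox a b \<Longrightarrow> \<gamma> fine q \<Longrightarrow>
              (\<Sum>(x,k)\<in>q. norm (Henstock_Kurzweil_Integration.content (k::real set) *\<^sub>R F x - integral k F)) < \<epsilon>"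
    and J: "\<And>t k. (t,k) \<in> p \<Longrightarrow> t \<in> J t k \<and> J t k \<subseteq> k \<and> (\<exists>u v. J t k = cbox u v)"
    and Jc: "\<And>t k. (t,k) \<in> p \<Longrightarrow> Henstock_Kurzweil_Integration.content (J t k) \<noteq> 0 \<Longrightarrow> interior (J t k) \<noteq> {}"
  shows "(\<Sum>(t,k)\<in>p. norm (Henstock_Kurzweil_Integration.content (J t k) *\<^sub>R F t - integral (J t k) F)) < \<epsilon>"
proof -
  define hh where "hh = (\<lambda>(t::real,k::real set). (t, J t k))"
  define g where "g = (\<lambda>(x::real,k::real set). norm (Henstock_Kurzweil_Integration.content k *\<^sub>R F x - integral k F))"
  have fin: "finite p" using p by blast
  have qd: "hh ` p tagged_partial_division_of cbox a b"
    unfolding tagged_partial_division_of_def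
  proof (intro conjI allI impI)
    show "finite (hh ` p)" using fin by simp
  next
    fix x K assume "(x, K) \<in> hh ` p"
    then obtain t k where tk: "(t,k) \<in> p" "x = t" "K = J t k" unfolding hh_def by auto
    then show "x \<in> K" using J by blast
    show "K \<subseteq> cbox a b" using tk J[OF tk(1)] tagged_division_ofD(3)[OF p tk(1)] by auto
    show "\<exists>a b. K = cbox a b" using tk J by blast
  next
    fix x1 K1 x2 K2 assume a: "(x1, K1) \<in> hh ` p \<and> (x2, K2) \<in> hh ` p \<and> (x1, K1) \<noteq> (x2, K2)"
    then obtain t1 k1 t2 k2 where tk: "(t1,k1) \<in> p" "(t2,k2) \<in> p" "x1 = t1" "K1 = J t1 k1" "x2 = t2" "K2 = J t2 k2"
      unfolding hh_def by auto
    then have ne: "(t1,k1) \<noteq> (t2,k2)" using a by auto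
    have "J t1 k1 \<subseteq> k1" "J t2 k2 \<subseteq> k2" using J[OF tk(1)] J[OF tk(2)] by blast+
    then have "interior K1 \<subseteq> interior k1" "interior K2 \<subseteq> interior k2"
      using tk by (simp_all add: interior_mono)
    then show "interior K1 \<inter> interior K2 = {}"
      using tagged_division_ofD(5)[OF p tk(1) tk(2) ne] by blast
  qed
  have qf: "\<gamma> fine hh ` p"
    using fine J unfolding fine_def hh_def by fastforce
  have "sum g (hh ` p) = sum (g \<circ> hh) p"
  proof (rule sum.reindex_nontrivial[OF fin])
    fix x y assume xy: "x \<in> p" "y \<in> p" "x \<noteq> y" "hh x = hh y"
    obtain t1 k1 where x: "x = (t1,k1)" by (cases x)
    obtain t2 k2 where y: "y = (t2,k2)" by (cases y)
    have eq: "t1 = t2" "J t1 k1 = J t2 k2" using xy(4) unfolding x y hh_def by auto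
    show "g (hh x) = 0"
    proof (cases "Henstock_Kurzweil_Integration.content (J t1 k1) = 0")
      case True
      obtain u v where uv: "J t1 k1 = cbox u v" using J xy(1) x by blast
      have "integral (J t1 k1) F = 0" unfolding uv by (rule integral_null) (use True uv in simp)
      then show ?thesis unfolding x hh_def g_def using True by simp
    next
      case False
      then have "interior (J t1 k1) \<noteq> {}" using Jc xy(1) x by blast
      moreover have "J t1 k1 \<subseteq> k1" using J xy(1) x by blast
      then have "interior (J t1 k1) \<subseteq> interior k1" by (rule interior_mono)
      moreover have "J t2 k2 \<subseteq> k2" using J xy(2) y by blast
      then have "interior (J t1 k1) \<subseteq> interior k2" using eq by (metis interior_mono)
      ultimately show ?thesis using tagged_division_ofD(5)[OF p xy(1)[unfolded x] xy(2)[unfolded y]] xy(3) x y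
        by blast
    qed
  qed
  moreover have "sum g (hh ` p) < \<epsilon>" unfolding g_def by (rule H[OF qd qf])
  ultimately show ?thesis unfolding g_def hh_def by (simp add: comp_def case_prod_unfold)
qed

lemma sq_small:
  fixes h M M' \<epsilon> :: real
  assumes "0 \<le> h" "0 \<le> M" "M \<le> M'" "0 < M'" "h \<le> \<epsilon> / M'"
  shows "M * h\<^sup>2 \<le> \<epsilon> * h"
proof -
  have "M * h \<le> M' * h" using assms by (simp add: mult_right_mono)
  also have "\<dots> \<le> \<epsilon>" using assms by (simp add: field_simps)
  finally have "(M * h) * h \<le> \<epsilon> * h" using assms by (simp add: mult_right_mono)
  then show ?thesis by (simp add: power2_eq_square algebra_simps)
qed

lemma gronwall_gauge:
  fixes e F :: "real \<Rightarrow> 'a::euclidean_space" and Nn :: "'a \<Rightarrow> real"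
  assumes ab: "a \<le> b" and c: "c > 0" and K: "K \<ge> 0" and C: "C > 0"
    and tri: "\<And>x y. Nn (x + y) \<le> Nn x + Nn y"
    and hom: "\<And>r x. Nn (r *\<^sub>R x) = \<bar>r\<bar> * Nn x"
    and up: "\<And>x. Nn x \<le> C * norm x"
    and integ: "\<And>s t. a \<le> s \<Longrightarrow> s \<le> t \<Longrightarrow> t \<le> b \<Longrightarrow> (F has_integral (e t - e s)) {s..t}"
    and loc: "\<And>t \<epsilon>. t \<in> {a..b} \<Longrightarrow> \<epsilon> > 0 \<Longrightarrow>
       \<forall>\<^sub>F h in at_right 0. Nn (e t + h *\<^sub>R F t) \<le> Nn (e t) + h * (- c * Nn (e t) + K + \<epsilon>)"
  shows "Nn (e b) \<le> exp (- c * (b - a)) * Nn (e a) + K * (1 - exp (- c * (b - a))) / c"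
proof -
  have N0: "Nn 0 = 0" using hom[of 0 0] by simp
  have Nm: "Nn (- x) = Nn x" for x using hom[of "-1" x] by simp
  have nn: "Nn x \<ge> 0" for x using tri[of x "-x"] N0 Nm[of x] by simp
  have Fint: "F integrable_on {a..b}" using integ[of a b] ab by blast
  have econt: "continuous_on {a..b} e"
  proof -
    have "continuous_on {a..b} (\<lambda>t. e a + integral {a..t} F)"
      by (intro continuous_intros indefinite_integral_continuous_1 Fint)
    moreover have "e a + integral {a..t} F = e t" if "t \<in> {a..b}" for t
      using integ[of a t] that by (simp add: integral_unique)
    ultimately show ?thesis by (metis (no_types, lifting) continuous_on_eq)
  qed
  obtain B0 where B0: "\<And>t. t \<in> {a..b} \<Longrightarrow> norm (e t) \<le> B0"
    using compact_imp_bounded[OF compact_continuous_image[OF econt compact_Icc]]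
    unfolding bounded_iff by (metis atLeastAtMost_iff image_eqI)
  define B where "B = C * max B0 0"
  have B: "B \<ge> 0" "\<And>t. t \<in> {a..b} \<Longrightarrow> Nn (e t) \<le> B"
  proof -
    show "B \<ge> 0" unfolding B_def using C by simp
    fix t assume t: "t \<in> {a..b}"
    have "Nn (e t) \<le> C * norm (e t)" by (rule up)
    also have "\<dots> \<le> C * max B0 0" using B0[OF t] C by (intro mult_left_mono) auto
    finally show "Nn (e t) \<le> B" unfolding B_def .
  qed
  define \<psi> where "\<psi> t = exp (c * t) * (Nn (e t) - K / c)" for t
  define E where "E = exp (c * b)"
  have Epos: "E > 0" unfolding E_def by simp
  have main: "\<psi> b - \<psi> a \<le> E * (\<epsilon> * (2 * (b - a) + 2 * C))" if \<epsilon>: "\<epsilon> > 0" for \<epsilon>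
  proof -
    define M' where "M' = K * c + c\<^sup>2 * B + 1"
    have Kc: "K * c \<ge> 0" "B * c\<^sup>2 \<ge> 0" using K c B by auto
    have M': "M' > 0" "K * c \<le> M'" "B * c\<^sup>2 \<le> M'" unfolding M'_def using Kc by (auto simp: algebra_simps)
    define \<delta>0 where "\<delta>0 = min (1 / c) (\<epsilon> / M')"
    have \<delta>0: "\<delta>0 > 0" unfolding \<delta>0_def using c \<epsilon> M' by simp
    have "\<forall>t\<in>{a..b}. \<exists>d>0. \<forall>h>0. h < d \<longrightarrow> Nn (e t + h *\<^sub>R F t) \<le> Nn (e t) + h * (- c * Nn (e t) + K + \<epsilon>)"
      using loc[OF _ \<epsilon>] unfolding eventually_at_right_field by simp
    then obtain d where d: "\<And>t. t\<in>{a..b} \<Longrightarrow> d t > 0"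
      "\<And>t h. t\<in>{a..b} \<Longrightarrow> 0 < h \<Longrightarrow> h < d t \<Longrightarrow> Nn (e t + h *\<^sub>R F t) \<le> Nn (e t) + h * (- c * Nn (e t) + K + \<epsilon>)"
      by metis
    define \<delta> where "\<delta> t = (if t \<in> {a..b} then min (d t) \<delta>0 else 1)" for t
    have \<delta>pos: "\<forall>t. \<delta> t > 0" unfolding \<delta>_def using d(1) \<delta>0 by simp
    obtain \<gamma>H where \<gamma>H: "gauge \<gamma>H"
      and H: "\<And>q. q tagged_partial_division_of cbox a b \<Longrightarrow> \<gamma>H fine q \<Longrightarrow>
              (\<Sum>(x,k)\<in>q. norm (Henstock_Kurzweil_Integration.content (k::real set) *\<^sub>R F x - integral k F)) < \<epsilon>"
      using Henstock_lemma[of F a b \<epsilon>] Fint \<epsilon> by auto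
    define \<gamma> where "\<gamma> t = \<gamma>H t \<inter> ball t (\<delta> t)" for t
    have "gauge \<gamma>" unfolding \<gamma>_def using \<gamma>H gauge_ball_dependent[OF \<delta>pos] by (rule gauge_Int)
    then obtain p where p: "p tagged_division_of {a..b}" "\<gamma> fine p" using fine_division_exists_real by blast
    have pH: "\<gamma>H fine p" and pB: "(\<lambda>t. ball t (\<delta> t)) fine p" using p(2) unfolding \<gamma>_def fine_Int by auto
    have kform: "\<exists>u v. k = {u..v} \<and> u \<le> t \<and> t \<le> v \<and> a \<le> u \<and> v \<le> b" if tk0: "(t,k) \<in> p" for t k
    proof -
      obtain u v where k: "k = cbox u v" using tagged_division_ofD(4)[OF p(1) tk0] by blast
      have "t \<in> k" "k \<subseteq> {a..b}" using tagged_division_ofD(2,3)[OF p(1) tk0] by auto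
      then show ?thesis using k by auto
    qed
    define D1 where "D1 = (\<lambda>(t,k). norm (Henstock_Kurzweil_Integration.content {Inf k..t} *\<^sub>R F t - integral {Inf k..t} F))"
    define D2 where "D2 = (\<lambda>(t,k). norm (Henstock_Kurzweil_Integration.content {t..Sup k} *\<^sub>R F t - integral {t..Sup k} F))"
    have S1: "sum D1 p < \<epsilon>"
      unfolding D1_def
    proof (rule henstock_sub[OF p(1) pH H, where J="\<lambda>t k. {Inf k..t}"])
      fix t k assume tk: "(t,k) \<in> p"
      then obtain u v where "k = {u..v}" "u \<le> t" "t \<le> v" using kform by blast
      then show "t \<in> {Inf k..t} \<and> {Inf k..t} \<subseteq> k \<and> (\<exists>u v. {Inf k..t} = cbox u v)" by auto
      assume "Henstock_Kurzweil_Integration.content {Inf k..t} \<noteq> 0"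
      then show "interior {Inf k..t} \<noteq> {}" by (auto split: if_splits)
    qed
    have S2: "sum D2 p < \<epsilon>"
      unfolding D2_def
    proof (rule henstock_sub[OF p(1) pH H, where J="\<lambda>t k. {t..Sup k}"])
      fix t k assume tk: "(t,k) \<in> p"
      then obtain u v where "k = {u..v}" "u \<le> t" "t \<le> v" using kform by blast
      then show "t \<in> {t..Sup k} \<and> {t..Sup k} \<subseteq> k \<and> (\<exists>u v. {t..Sup k} = cbox u v)" by auto
      assume "Henstock_Kurzweil_Integration.content {t..Sup k} \<noteq> 0"
      then show "interior {t..Sup k} \<noteq> {}" by (auto split: if_splits)
    qed
    have elem: "\<psi> (Sup (snd x)) - \<psi> (Inf (snd x)) \<le> E * (2 * \<epsilon> * (Sup (snd x) - Inf (snd x)) + C * D1 x + C * D2 x)"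
      if xp: "x \<in> p" for x
    proof -
      obtain t k where x: "x = (t,k)" by (cases x)
      have tk: "(t,k) \<in> p" using xp x by simp
      obtain u v where k: "k = {u..v}" "u \<le> t" "t \<le> v" "a \<le> u" "v \<le> b" using kform[OF tk] by blast
      have ik: "Inf k = u" "Sup k = v" using k by auto
      have tab: "t \<in> {a..b}" using k by auto
      have "k \<subseteq> ball t (\<delta> t)" using pB tk unfolding fine_def by blast
      moreover have "u \<in> k" "v \<in> k" using k by auto
      ultimately have "u \<in> ball t (\<delta> t)" "v \<in> ball t (\<delta> t)" by auto
      then have hd: "t - u < \<delta> t" "v - t < \<delta> t" by (auto simp: dist_real_def)
      have \<delta>t: "\<delta> t = min (d t) \<delta>0" unfolding \<delta>_def using tab by simp
      define h1 where "h1 = t - u"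
      define h2 where "h2 = v - t"
      have h1: "0 \<le> h1" "h1 < d t" "h1 \<le> \<epsilon> / M'" "c * h1 \<le> 1"
        using hd k \<delta>t c unfolding h1_def \<delta>0_def by (auto simp: field_simps)
      have h2: "0 \<le> h2" "h2 < d t" "h2 \<le> \<epsilon> / M'" "c * h2 \<le> 1"
        using hd k \<delta>t c unfolding h2_def \<delta>0_def by (auto simp: field_simps)
      define r1 where "r1 = e t - e u - h1 *\<^sub>R F t"
      define r2 where "r2 = e v - e t - h2 *\<^sub>R F t"
      have int1: "integral {u..t} F = e t - e u" using integ[of u t] k by (simp add: integral_unique)
      have int2: "integral {t..v} F = e v - e t" using integ[of t v] k by (simp add: integral_unique)
      have D1: "D1 x = norm r1" unfolding D1_def x ik r1_def h1_def using k int1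
        by (simp add: norm_minus_commute)
      have D2: "D2 x = norm r2" unfolding D2_def x ik r2_def h2_def using k int2
        by (simp add: norm_minus_commute)
      have R1: "Nn (e v) \<le> Nn (e t) + h2 * (- c * Nn (e t) + K + \<epsilon>) + Nn r2"
      proof -
        have "e v = (e t + h2 *\<^sub>R F t) + r2" unfolding r2_def by simp
        then have "Nn (e v) \<le> Nn (e t + h2 *\<^sub>R F t) + Nn r2" using tri by metis
        moreover have "Nn (e t + h2 *\<^sub>R F t) \<le> Nn (e t) + h2 * (- c * Nn (e t) + K + \<epsilon>)"
        proof (cases "h2 = 0")
          case True then show ?thesis by simp
        next
          case False then show ?thesis using d(2)[OF tab _ h2(2)] h2(1) by simp
        qed
        ultimately show ?thesis by linarith
      qed
      have R: "\<psi> v - \<psi> t \<le> exp (c * t) * (K * c * h2\<^sup>2) + exp (c * v) * (h2 * \<epsilon> + Nn r2)"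
        using step_right[OF c h2(1) h2(4) K nn R1, of t] \<epsilon> h2(1) nn[of r2]
        unfolding \<psi>_def h2_def by simp
      have L1: "Nn (e t) * (1 + c * h1) \<le> Nn (e u) + h1 * (K + \<epsilon>) + Nn r1"
      proof -
        have dt: "d t / 2 > 0" "d t / 2 < d t" using d(1)[OF tab] by auto
        have "Nn (e t) \<le> Nn (e t - h1 *\<^sub>R F t) + h1 * (- c * Nn (e t) + K + \<epsilon>)"
          by (rule conv_left[OF tri hom dt(1) h1(1)]) (rule d(2)[OF tab dt(1) dt(2)])
        moreover have "e t - h1 *\<^sub>R F t = e u + r1" unfolding r1_def by simp
        then have "Nn (e t - h1 *\<^sub>R F t) \<le> Nn (e u) + Nn r1" using tri by metis
        ultimately have "Nn (e t) \<le> Nn (e u) + Nn r1 + h1 * (- c * Nn (e t) + K + \<epsilon>)" by linarith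
        then show ?thesis by (simp add: algebra_simps)
      qed
      have L: "\<psi> t - \<psi> u \<le> exp (c * t) * (B * (c * h1)\<^sup>2 + (h1 * \<epsilon> + Nn r1))"
        using step_left[OF c h1(1) K nn B(2) L1, of t] k \<epsilon> h1(1) nn[of r1]
        unfolding \<psi>_def h1_def by simp
      have et: "exp (c * t) \<le> E" "exp (c * v) \<le> E" unfolding E_def using k c by auto
      have q1: "K * c * h2\<^sup>2 \<le> \<epsilon> * h2" by (rule sq_small[OF h2(1) Kc(1) M'(2) M'(1) h2(3)])
      have q2: "B * (c * h1)\<^sup>2 \<le> \<epsilon> * h1"
        using sq_small[OF h1(1) Kc(2) M'(3) M'(1) h1(3)] by (simp add: power_mult_distrib algebra_simps)
      have nr: "Nn r1 \<le> C * D1 x" "Nn r2 \<le> C * D2 x" using up D1 D2 by auto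
      have a1: "exp (c * t) * (K * c * h2\<^sup>2) \<le> E * (\<epsilon> * h2)"
        using et q1 K c h2 Epos by (rule_tac mult_mono) auto
      have a2: "exp (c * v) * (h2 * \<epsilon> + Nn r2) \<le> E * (h2 * \<epsilon> + C * D2 x)"
        using et nr \<epsilon> h2 Epos nn[of r2] by (rule_tac mult_mono) auto
      have a3: "exp (c * t) * (B * (c * h1)\<^sup>2 + (h1 * \<epsilon> + Nn r1)) \<le> E * (\<epsilon> * h1 + (h1 * \<epsilon> + C * D1 x))"
        using et nr q2 \<epsilon> h1 Epos nn[of r1] B(1) by (rule_tac mult_mono) auto
      have "E * (\<epsilon> * h2) + E * (h2 * \<epsilon> + C * D2 x) + E * (\<epsilon> * h1 + (h1 * \<epsilon> + C * D1 x))
          = E * (2 * \<epsilon> * (v - u) + C * D1 x + C * D2 x)"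
        unfolding h1_def h2_def by (simp add: algebra_simps)
      then have "\<psi> v - \<psi> u \<le> E * (2 * \<epsilon> * (v - u) + C * D1 x + C * D2 x)" using R L a1 a2 a3 by linarith
      then show ?thesis unfolding x using ik by simp
    qed
    have "\<psi> b - \<psi> a = (\<Sum>x\<in>p. \<psi> (Sup (snd x)) - \<psi> (Inf (snd x)))"
      using additive_tagged_division_1[OF ab p(1), of \<psi>] by (simp add: case_prod_unfold)
    also have "\<dots> \<le> (\<Sum>x\<in>p. E * (2 * \<epsilon> * (Sup (snd x) - Inf (snd x)) + C * D1 x + C * D2 x))"
      by (rule sum_mono) (rule elem)
    also have "\<dots> = E * (\<Sum>x\<in>p. 2 * \<epsilon> * (Sup (snd x) - Inf (snd x)) + C * D1 x + C * D2 x)"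
      by (rule sum_distrib_left[symmetric])
    also have "(\<Sum>x\<in>p. 2 * \<epsilon> * (Sup (snd x) - Inf (snd x)) + C * D1 x + C * D2 x)
        = 2 * \<epsilon> * (\<Sum>x\<in>p. Sup (snd x) - Inf (snd x)) + C * sum D1 p + C * sum D2 p"
      by (simp only: sum.distrib sum_distrib_left)
    also have "(\<Sum>x\<in>p. Sup (snd x) - Inf (snd x)) = b - a"
      using additive_tagged_division_1[OF ab p(1), of "\<lambda>x. x"] by (simp add: case_prod_unfold)
    also have "E * (2 * \<epsilon> * (b - a) + C * sum D1 p + C * sum D2 p) \<le> E * (2 * \<epsilon> * (b - a) + C * \<epsilon> + C * \<epsilon>)"
      using S1 S2 C Epos \<epsilon> by (intro mult_left_mono add_mono) auto
    also have "\<dots> = E * (\<epsilon> * (2 * (b - a) + 2 * C))" by (simp add: algebra_simps)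
    finally show ?thesis .
  qed
  have psi: "\<psi> b \<le> \<psi> a"
  proof (rule ccontr)
    assume "\<not> \<psi> b \<le> \<psi> a"
    then have g: "\<psi> b - \<psi> a > 0" by simp
    define W where "W = E * (2 * (b - a) + 2 * C)"
    have W: "W > 0" unfolding W_def using Epos C ab by simp
    define \<epsilon> where "\<epsilon> = (\<psi> b - \<psi> a) / (2 * W)"
    have "\<epsilon> > 0" unfolding \<epsilon>_def using g W by simp
    then have "\<psi> b - \<psi> a \<le> E * (\<epsilon> * (2 * (b - a) + 2 * C))" by (rule main)
    also have "\<dots> = (\<psi> b - \<psi> a) / 2" unfolding \<epsilon>_def W_def using W W_def by (simp add: field_simps)
    finally show False using g by simp
  qed
  have "Nn (e b) - K / c \<le> exp (c * a) / exp (c * b) * (Nn (e a) - K / c)"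
    using psi unfolding \<psi>_def by (simp add: field_simps)
  also have "exp (c * a) / exp (c * b) = exp (- c * (b - a))" by (simp add: exp_diff[symmetric] algebra_simps)
  finally show ?thesis by (simp add: algebra_simps diff_divide_distrib)
qed

context
  fixes T :: real and U :: "(real^'k) set" and NU :: "real^'k \<Rightarrow> real"
  assumes T: "T \<ge> 0" and Uc: "compact U" and nu: "is_norm NU"
begin

lemma ctrl_bdd:
  assumes "u \<in> controls T U" "v \<in> controls T U"
  shows "bdd_above ((\<lambda>t. NU (u t - v t)) ` {0..T})"
proof -
  obtain R where R: "\<And>x. x \<in> U \<Longrightarrow> norm x \<le> R" using compact_imp_bounded[OF Uc] unfolding bounded_iff by blast
  obtain C where C: "C > 0" "\<And>x. NU x \<le> C * norm x" using is_norm_upper[OF nu] by blast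
  have "NU (u t - v t) \<le> C * (R + R)" if "t \<in> {0..T}" for t
  proof -
    have uv: "u t \<in> U" "v t \<in> U" using assms that unfolding controls_def by auto
    have "NU (u t - v t) \<le> C * norm (u t - v t)" by (rule C(2))
    also have "\<dots> \<le> C * (R + R)"
      using norm_triangle_ineq4[of "u t" "v t"] R[OF uv(1)] R[OF uv(2)] C(1) by (intro mult_left_mono) auto
    finally show ?thesis .
  qed
  then show ?thesis unfolding bdd_above_def by blast
qed

lemma ctrl_dist_ge:
  assumes "u \<in> controls T U" "v \<in> controls T U" "t \<in> {0..T}"
  shows "NU (u t - v t) \<le> ctrl_dist T NU u v"
  unfolding ctrl_dist_def using assms by (intro cSup_upper ctrl_bdd) auto

lemma ctrl_dist_le:
  assumes "\<And>t. t \<in> {0..T} \<Longrightarrow> NU (u t - v t) \<le> B"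
  shows "ctrl_dist T NU u v \<le> B"
  unfolding ctrl_dist_def using assms T by (intro cSup_least) auto

lemma ctrl_dist_nonneg:
  assumes "u \<in> controls T U" "v \<in> controls T U"
  shows "ctrl_dist T NU u v \<ge> 0"
  using ctrl_dist_ge[OF assms, of 0] is_norm_nonneg[OF nu, of "u 0 - v 0"] T by auto

lemma ctrl_dist_sym: "ctrl_dist T NU u v = ctrl_dist T NU v u"
  unfolding ctrl_dist_def using is_norm_commute[OF nu] by metis

lemma ctrl_dist_tri:
  assumes "u \<in> controls T U" "v \<in> controls T U" "w \<in> controls T U"
  shows "ctrl_dist T NU u w \<le> ctrl_dist T NU u v + ctrl_dist T NU v w"
proof (rule ctrl_dist_le)
  fix t assume t: "t \<in> {0..T}"
  have "NU (u t - w t) \<le> NU (u t - v t) + NU (v t - w t)"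
    using is_normD(1)[OF nu, of "u t - v t" "v t - w t"] by simp
  also have "\<dots> \<le> ctrl_dist T NU u v + ctrl_dist T NU v w"
    using ctrl_dist_ge[OF assms(1,2) t] ctrl_dist_ge[OF assms(2,3) t] by simp
  finally show "NU (u t - w t) \<le> ctrl_dist T NU u v + ctrl_dist T NU v w" .
qed

lemma ctrl_dist_zero:
  assumes "u \<in> controls T U" "v \<in> controls T U" "ctrl_dist T NU u v \<le> 0"
  shows "u = v"
proof
  fix t
  show "u t = v t"
  proof (cases "t \<in> {0..T}")
    case True
    then have "NU (u t - v t) \<le> 0" using ctrl_dist_ge[OF assms(1,2) True] assms(3) by simp
    then have "NU (u t - v t) = 0" using is_norm_nonneg[OF nu, of "u t - v t"] by simp
    then show ?thesis using is_normD(3)[OF nu] by simp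
  next
    case False
    then show ?thesis using assms unfolding controls_def by auto
  qed
qed

context
  fixes MSA :: "(real \<Rightarrow> real^'k) \<Rightarrow> (real \<Rightarrow> real^'k)" and L :: real
  assumes maps: "\<And>u. u \<in> controls T U \<Longrightarrow> MSA u \<in> controls T U"
    and contr: "\<And>u v. u \<in> controls T U \<Longrightarrow> v \<in> controls T U \<Longrightarrow>
        ctrl_dist T NU (MSA u) (MSA v) \<le> L * ctrl_dist T NU u v"
    and L: "0 \<le> L" "L < 1"
begin

lemma iter_in: "u \<in> controls T U \<Longrightarrow> (MSA ^^ i) u \<in> controls T U"
  by (induction i) (auto intro: maps)

lemma iter_contr:
  assumes "u \<in> controls T U" "v \<in> controls T U"
  shows "ctrl_dist T NU ((MSA ^^ i) u) ((MSA ^^ i) v) \<le> L ^ i * ctrl_dist T NU u v"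
proof (induction i)
  case 0 then show ?case by simp
next
  case (Suc i)
  have "ctrl_dist T NU ((MSA ^^ Suc i) u) ((MSA ^^ Suc i) v) \<le> L * ctrl_dist T NU ((MSA ^^ i) u) ((MSA ^^ i) v)"
    using contr[OF iter_in[OF assms(1)] iter_in[OF assms(2)]] by simp
  also have "\<dots> \<le> L * (L ^ i * ctrl_dist T NU u v)" using Suc L by (intro mult_left_mono) auto
  finally show ?case by simp
qed

lemma iter_bound:
  assumes u0: "u0 \<in> controls T U"
  shows "ctrl_dist T NU u0 ((MSA ^^ m) u0) \<le> ctrl_dist T NU u0 (MSA u0) / (1 - L)"
proof (induction m)
  case 0
  have "ctrl_dist T NU u0 u0 \<le> 0" by (rule ctrl_dist_le) (simp add: is_norm_zero[OF nu])
  moreover have "0 \<le> ctrl_dist T NU u0 (MSA u0) / (1 - L)" using ctrl_dist_nonneg[OF u0 maps[OF u0]] L by simp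
  ultimately show ?case by simp
next
  case (Suc m)
  have "ctrl_dist T NU u0 ((MSA ^^ Suc m) u0) \<le> ctrl_dist T NU u0 (MSA u0) + ctrl_dist T NU (MSA u0) ((MSA ^^ Suc m) u0)"
    using ctrl_dist_tri[OF u0 maps[OF u0] iter_in[OF u0]] by blast
  also have "ctrl_dist T NU (MSA u0) ((MSA ^^ Suc m) u0) \<le> L * ctrl_dist T NU u0 ((MSA ^^ m) u0)"
    using contr[OF u0 iter_in[OF u0, of m]] by simp
  also have "\<dots> \<le> L * (ctrl_dist T NU u0 (MSA u0) / (1 - L))" using Suc L by (intro mult_left_mono) auto
  also have "ctrl_dist T NU u0 (MSA u0) + L * (ctrl_dist T NU u0 (MSA u0) / (1 - L)) = ctrl_dist T NU u0 (MSA u0) / (1 - L)"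
    using L by (simp add: field_simps)
  finally show ?case by simp
qed

lemma iter_cauchy_bound:
  assumes u0: "u0 \<in> controls T U" and ij: "i \<le> j"
  shows "ctrl_dist T NU ((MSA ^^ i) u0) ((MSA ^^ j) u0) \<le> L ^ i * (ctrl_dist T NU u0 (MSA u0) / (1 - L))"
proof -
  have "(MSA ^^ j) u0 = (MSA ^^ i) ((MSA ^^ (j - i)) u0)" using ij by (metis funpow_add le_add_diff_inverse comp_apply)
  then have "ctrl_dist T NU ((MSA ^^ i) u0) ((MSA ^^ j) u0) \<le> L ^ i * ctrl_dist T NU u0 ((MSA ^^ (j - i)) u0)"
    using iter_contr[OF u0 iter_in[OF u0]] by simp
  also have "\<dots> \<le> L ^ i * (ctrl_dist T NU u0 (MSA u0) / (1 - L))"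
    using iter_bound[OF u0] L by (intro mult_left_mono) auto
  finally show ?thesis .
qed

lemma fixed_point_exists:
  assumes u0: "u0 \<in> controls T U"
  shows "\<exists>uh. uh \<in> controls T U \<and> MSA uh = uh"
proof -
  define us where "us i = (MSA ^^ i) u0" for i
  define D where "D = ctrl_dist T NU u0 (MSA u0) / (1 - L)"
  have D: "D \<ge> 0" unfolding D_def using ctrl_dist_nonneg[OF u0 maps[OF u0]] L by simp
  have usc: "us i \<in> controls T U" for i unfolding us_def by (rule iter_in[OF u0])
  obtain C where C: "C > 0" "\<And>x. norm x \<le> C * NU x" using is_norm_lower[OF nu] by blast
  have Lp: "(\<lambda>i. L ^ i) \<longlonglongrightarrow> 0" using L by (intro LIMSEQ_power_zero) simp
  have pt: "NU (us i t - us j t) \<le> L ^ min i j * D" if t: "t \<in> {0..T}" for i j t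
  proof (cases "i \<le> j")
    case True
    then show ?thesis using ctrl_dist_ge[OF usc usc t, of i j] iter_cauchy_bound[OF u0 True]
      unfolding us_def D_def by simp
  next
    case False
    then have "j \<le> i" by simp
    then show ?thesis using ctrl_dist_ge[OF usc usc t, of j i] iter_cauchy_bound[OF u0 \<open>j \<le> i\<close>]
        is_norm_commute[OF nu, of "us i t" "us j t"] False
      unfolding us_def D_def by simp
  qed
  have conv: "convergent (\<lambda>i. us i t)" for t
  proof (cases "t \<in> {0..T}")
    case False
    then have "us i t = 0" for i using usc[of i] unfolding controls_def by auto
    then show ?thesis by (simp add: convergent_const)
  next
    case t: True
    show ?thesis
    proof (rule Cauchy_convergent, rule metric_CauchyI)
      fix e :: real assume e: "e > 0"
      have "(\<lambda>i. C * D * L ^ i) \<longlonglongrightarrow> C * D * 0" by (intro tendsto_intros Lp)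
      then have "\<forall>\<^sub>F i in sequentially. C * D * L ^ i < e" using e by (simp add: order_tendstoD(2))
      then obtain M where M: "\<And>i. i \<ge> M \<Longrightarrow> C * D * L ^ i < e" unfolding eventually_sequentially by blast
      show "\<exists>M. \<forall>m\<ge>M. \<forall>n\<ge>M. dist (us m t) (us n t) < e"
      proof (intro exI allI impI)
        fix m n assume mn: "M \<le> m" "M \<le> n"
        have "dist (us m t) (us n t) \<le> C * NU (us m t - us n t)" using C(2) by (simp add: dist_norm)
        also have "\<dots> \<le> C * (L ^ min m n * D)" using pt[OF t] C(1) by (intro mult_left_mono) auto
        also have "\<dots> = C * D * L ^ min m n" by simp
        also have "\<dots> < e" using M[of "min m n"] mn by simp
        finally show "dist (us m t) (us n t) < e" .
      qed
    qed
  qed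
  define uh where "uh t = lim (\<lambda>i. us i t)" for t
  have lim: "(\<lambda>i. us i t) \<longlonglongrightarrow> uh t" for t unfolding uh_def using conv convergent_LIMSEQ_iff by blast
  have uhc: "uh \<in> controls T U"
    unfolding controls_def
  proof (intro CollectI conjI ballI allI impI)
    show "uh \<in> borel_measurable lborel"
      by (rule borel_measurable_LIMSEQ_metric[where f=us]) (use usc lim in \<open>auto simp: controls_def\<close>)
    fix t assume t: "t \<in> {0..T}"
    show "uh t \<in> U"
      by (rule closed_sequentially[OF compact_imp_closed[OF Uc] _ lim]) (use usc t in \<open>auto simp: controls_def\<close>)
  next
    fix t assume t: "t \<notin> {0..T}"
    then have "us i t = 0" for i using usc[of i] unfolding controls_def by auto
    then show "uh t = 0" using lim[of t] LIMSEQ_unique[OF _ tendsto_const] by auto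
  qed
  have tail: "NU (uh t - us i t) \<le> L ^ i * D" if t: "t \<in> {0..T}" for i t
  proof -
    have "(\<lambda>j. NU (us j t - us i t)) \<longlonglongrightarrow> NU (uh t - us i t)"
      using is_norm_continuous[OF nu, of UNIV] lim[of t]
      by (intro continuous_on_tendsto_compose[where f=NU and s=UNIV] tendsto_intros) auto
    moreover have "\<forall>j\<ge>i. NU (us j t - us i t) \<le> L ^ i * D"
      using pt[OF t] by (metis min.absorb_iff2 is_norm_commute[OF nu])
    ultimately show ?thesis by (rule Lim_bounded)
  qed
  have "MSA uh = uh"
  proof
    fix t
    show "MSA uh t = uh t"
    proof (cases "t \<in> {0..T}")
      case False
      then show ?thesis using maps[OF uhc] uhc unfolding controls_def by auto
    next
      case t: True
      have "(\<lambda>i. us (Suc i) t) \<longlonglongrightarrow> MSA uh t"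
      proof -
        have "(\<lambda>i. us (Suc i) t - MSA uh t) \<longlonglongrightarrow> 0"
        proof (rule Lim_null_comparison)
          show "\<forall>\<^sub>F i in sequentially. norm (us (Suc i) t - MSA uh t) \<le> C * (L * (L ^ i * D))"
          proof (intro always_eventually allI)
            fix i
            have "norm (us (Suc i) t - MSA uh t) \<le> C * NU (us (Suc i) t - MSA uh t)" by (rule C(2))
            also have "NU (us (Suc i) t - MSA uh t) \<le> ctrl_dist T NU (MSA (us i)) (MSA uh)"
              using ctrl_dist_ge[OF maps[OF usc] maps[OF uhc] t] unfolding us_def by simp
            also have "\<dots> \<le> L * ctrl_dist T NU (us i) uh" by (rule contr[OF usc uhc])
            also have "ctrl_dist T NU (us i) uh \<le> L ^ i * D"
              by (rule ctrl_dist_le) (use tail is_norm_commute[OF nu] in metis)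
            finally show "norm (us (Suc i) t - MSA uh t) \<le> C * (L * (L ^ i * D))"
              using C(1) L by (simp add: mult_left_mono)
          qed
          show "(\<lambda>i. C * (L * (L ^ i * D))) \<longlonglongrightarrow> 0"
            using tendsto_mult[OF tendsto_const[of "C * L"] tendsto_mult[OF Lp tendsto_const[of D]]]
            by (simp add: mult.assoc)
        qed
        then show ?thesis by (simp add: LIM_zero_iff)
      qed
      moreover have "(\<lambda>i. us (Suc i) t) \<longlonglongrightarrow> uh t" using lim[of t] by (rule LIMSEQ_Suc)
      ultimately show ?thesis by (rule LIMSEQ_unique)
    qed
  qed
  then show ?thesis using uhc by blast
qed

lemma contraction_result:
  assumes U0: "0 \<in> U"
  shows "(\<exists>!uh. uh \<in> controls T U \<and> MSA uh = uh)
       \<and> (\<forall>uh u0. uh \<in> controls T U \<and> MSA uh = uh \<and> u0 \<in> controls T U \<longrightarrow>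
             ((\<lambda>i. ctrl_dist T NU ((MSA ^^ i) u0) uh) \<longlonglongrightarrow> 0)
           \<and> (\<forall>i t. t \<in> {0..T} \<longrightarrow>
                NU ((MSA ^^ i) u0 t - uh t) \<le> L ^ i / (1 - L) * ctrl_dist T NU (MSA u0) u0))"
proof (intro conjI allI impI)
  have z: "(\<lambda>_. 0) \<in> controls T U"
    unfolding controls_def using U0 by auto
  obtain uh where uh: "uh \<in> controls T U" "MSA uh = uh" using fixed_point_exists[OF z] by blast
  show "\<exists>!uh. uh \<in> controls T U \<and> MSA uh = uh"
  proof (rule ex1I[of _ uh])
    show "uh \<in> controls T U \<and> MSA uh = uh" using uh by simp
    fix w assume w: "w \<in> controls T U \<and> MSA w = w"
    have "ctrl_dist T NU w uh \<le> L * ctrl_dist T NU w uh"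
      using contr[of w uh] w uh by simp
    then have "(1 - L) * ctrl_dist T NU w uh \<le> 0" by (simp add: algebra_simps)
    then have "ctrl_dist T NU w uh \<le> 0" using L by (simp add: mult_le_0_iff)
    then show "w = uh" using ctrl_dist_zero w uh by blast
  qed
next
  fix uh u0 assume a: "uh \<in> controls T U \<and> MSA uh = uh \<and> u0 \<in> controls T U"
  then have uh: "uh \<in> controls T U" "MSA uh = uh" and u0: "u0 \<in> controls T U" by auto
  have fix_it: "(MSA ^^ i) uh = uh" for i by (induction i) (use uh in auto)
  have di: "ctrl_dist T NU ((MSA ^^ i) u0) uh \<le> L ^ i * ctrl_dist T NU u0 uh" for i
    using iter_contr[OF u0 uh(1), of i] fix_it by simp
  have d0: "ctrl_dist T NU u0 uh \<le> ctrl_dist T NU u0 (MSA u0) / (1 - L)"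
  proof -
    have "ctrl_dist T NU u0 uh \<le> ctrl_dist T NU u0 (MSA u0) + ctrl_dist T NU (MSA u0) uh"
      by (rule ctrl_dist_tri[OF u0 maps[OF u0] uh(1)])
    also have "ctrl_dist T NU (MSA u0) uh \<le> L * ctrl_dist T NU u0 uh"
      using contr[OF u0 uh(1)] uh(2) by simp
    finally have "(1 - L) * ctrl_dist T NU u0 uh \<le> ctrl_dist T NU u0 (MSA u0)" by (simp add: algebra_simps)
    then show ?thesis using L by (simp add: field_simps)
  qed
  show "(\<lambda>i. ctrl_dist T NU ((MSA ^^ i) u0) uh) \<longlonglongrightarrow> 0"
  proof (rule Lim_null_comparison)
    show "\<forall>\<^sub>F i in sequentially. norm (ctrl_dist T NU ((MSA ^^ i) u0) uh) \<le> L ^ i * ctrl_dist T NU u0 uh"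
      using di ctrl_dist_nonneg[OF iter_in[OF u0] uh(1)] by (intro always_eventually allI) simp
    show "(\<lambda>i. L ^ i * ctrl_dist T NU u0 uh) \<longlonglongrightarrow> 0"
      using tendsto_mult[OF LIMSEQ_power_zero[of L] tendsto_const[of "ctrl_dist T NU u0 uh"]] L by simp
  qed
  fix i t assume t: "t \<in> {0..T}"
  have "NU ((MSA ^^ i) u0 t - uh t) \<le> ctrl_dist T NU ((MSA ^^ i) u0) uh"
    by (rule ctrl_dist_ge[OF iter_in[OF u0] uh(1) t])
  also have "\<dots> \<le> L ^ i * ctrl_dist T NU u0 uh" by (rule di)
  also have "\<dots> \<le> L ^ i * (ctrl_dist T NU u0 (MSA u0) / (1 - L))" using d0 L by (intro mult_left_mono) auto
  also have "\<dots> = L ^ i / (1 - L) * ctrl_dist T NU (MSA u0) u0" using ctrl_dist_sym by simp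
  finally show "NU ((MSA ^^ i) u0 t - uh t) \<le> L ^ i / (1 - L) * ctrl_dist T NU (MSA u0) u0" .
qed

end
end

lemma integ_sub:
  fixes g :: "real \<Rightarrow> 'a::euclidean_space"
  assumes st: "\<And>t. t \<in> {0..T} \<Longrightarrow> (g has_integral (X t - xst)) {0..t}"
    and s: "0 \<le> s" "s \<le> s'" "s' \<le> T"
  shows "(g has_integral (X s' - X s)) {s..s'}"
proof -
  have i1: "(g has_integral (X s' - xst)) {0..s'}" using st s by auto
  have i2: "(g has_integral (X s - xst)) {0..s}" using st s by auto
  have gi: "g integrable_on {0..s'}" using i1 by blast
  have gs: "g integrable_on {s..s'}" using integrable_subinterval_real[OF gi] s by auto
  have "integral {0..s} g + integral {s..s'} g = integral {0..s'} g"
    using Henstock_Kurzweil_Integration.integral_combine[OF s(1,2) gi] .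
  then have "integral {s..s'} g = X s' - X s" using i1 i2 by (simp add: integral_unique algebra_simps)
  then show ?thesis using gs by (metis has_integral_integral)
qed

lemma integ_sub_back:
  fixes g :: "real \<Rightarrow> 'a::euclidean_space"
  assumes st: "\<And>t. t \<in> {0..T} \<Longrightarrow> (g has_integral (Y t - z)) {t..T}"
    and s: "0 \<le> s" "s \<le> s'" "s' \<le> T"
  shows "(g has_integral (Y s - Y s')) {s..s'}"
proof -
  have i1: "(g has_integral (Y s - z)) {s..T}" using st s by auto
  have i2: "(g has_integral (Y s' - z)) {s'..T}" using st s by auto
  have gi: "g integrable_on {s..T}" using i1 by blast
  have gs: "g integrable_on {s..s'}" using integrable_subinterval_real[OF gi] s by auto
  have "integral {s..s'} g + integral {s'..T} g = integral {s..T} g"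
    using Henstock_Kurzweil_Integration.integral_combine[OF s(2,3) gi] .
  then have "integral {s..s'} g = Y s - Y s'" using i1 i2 by (simp add: integral_unique algebra_simps)
  then show ?thesis using gs by (metis has_integral_integral)
qed

lemma reflect_T:
  fixes G :: "real \<Rightarrow> 'a::euclidean_space"
  assumes "(G has_integral i) {a..b}"
  shows "((\<lambda>\<sigma>. G (T - \<sigma>)) has_integral i) {T - b..T - a}"
proof -
  have "((\<lambda>x. G (1 *\<^sub>R x + T)) has_integral (i /\<^sub>R 1 ^ DIM(real))) (cbox ((a - T) /\<^sub>R 1) ((b - T) /\<^sub>R 1))"
    using has_integral_affinity'[of G i a b 1 T] assms by simp
  then have "((\<lambda>x. G (x + T)) has_integral i) {a - T..b - T}" by simp
  then have "((\<lambda>x. G (- x + T)) has_integral i) {- (b - T)..- (a - T)}"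
    using has_integral_reflect_real[where f="\<lambda>x. G (x + T)" and i=i and a="a - T" and b="b - T"] by simp
  then show ?thesis by (simp add: algebra_simps)
qed

theorem theorem5:
  fixes T c :: real
    and U :: "(real^'k) set"
    and f :: "real \<Rightarrow> real^'n \<Rightarrow> real^'k \<Rightarrow> real^'n"
    and Dfx :: "real \<Rightarrow> real^'n \<Rightarrow> real^'k \<Rightarrow> real^'n^'n"
    and Dfu :: "real \<Rightarrow> real^'n \<Rightarrow> real^'k \<Rightarrow> real^'k^'n"
    and x0 :: "real^'n"
    and \<phi> :: "real \<Rightarrow> real^'n \<Rightarrow> real^'k \<Rightarrow> real"
    and \<phi>x :: "real \<Rightarrow> real^'n \<Rightarrow> real^'k \<Rightarrow> real^'n"
    and \<psi> :: "real^'n \<Rightarrow> real"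
    and \<psi>x :: "real^'n \<Rightarrow> real^'n"
    and xs :: "(real \<Rightarrow> real^'k) \<Rightarrow> real \<Rightarrow> real^'n"
    and lam :: "(real \<Rightarrow> real^'k) \<Rightarrow> real \<Rightarrow> real^'n"
    and h :: "real \<Rightarrow> real^'n \<Rightarrow> real^'n \<Rightarrow> real^'k"
    and MSA :: "(real \<Rightarrow> real^'k) \<Rightarrow> (real \<Rightarrow> real^'k)"
    and X \<Lambda> :: "(real^'n) set"
    and N :: "real^'n \<Rightarrow> real"
    and NU :: "real^'k \<Rightarrow> real"
    and l_fu l_fxx l_fxu l_phixx l_phixu l_psixx l_hx l_hl :: real
  assumes T_pos: "T > 0"
    and U_compact: "compact U" and U_zero: "0 \<in> U"
    and f_cont: "continuous_on ({0..T} \<times> UNIV \<times> U) (\<lambda>(t, x, v). f t x v)"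
    and f_dx: "\<And>t x v. t \<in> {0..T} \<Longrightarrow> v \<in> U \<Longrightarrow>
                 ((\<lambda>y. f t y v) has_derivative (\<lambda>y. Dfx t x v *v y)) (at x)"
    and Dfx_cont: "\<And>t v. t \<in> {0..T} \<Longrightarrow> v \<in> U \<Longrightarrow> continuous_on UNIV (\<lambda>x. Dfx t x v)"
    and f_du: "\<And>t x v. t \<in> {0..T} \<Longrightarrow> v \<in> U \<Longrightarrow>
                 ((\<lambda>w. f t x w) has_derivative (\<lambda>w. Dfu t x v *v w)) (at v within U)"
    and Dfu_cont: "\<And>t x. t \<in> {0..T} \<Longrightarrow> continuous_on U (\<lambda>v. Dfu t x v)"
    and phi_dx: "\<And>t x v. t \<in> {0..T} \<Longrightarrow> v \<in> U \<Longrightarrow>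
                 ((\<lambda>y. \<phi> t y v) has_derivative (\<lambda>y. \<phi>x t x v \<bullet> y)) (at x)"
    and psi_dx: "\<And>x. (\<psi> has_derivative (\<lambda>y. \<psi>x x \<bullet> y)) (at x)"
    \<comment> \<open>state: x_u(t) = x0 + int_0^t f(s, x_u(s), u(s)) ds\<close>
    and state: "\<And>u t. u \<in> controls T U \<Longrightarrow> t \<in> {0..T} \<Longrightarrow>
                 ((\<lambda>s. f s (xs u s) (u s)) has_integral (xs u t - x0)) {0..t}"
    \<comment> \<open>costate: lam_u(t) = psi_x(x_u(T)) + int_t^T (D_xf^T lam_u + phi_x) ds\<close>
    and costate: "\<And>u t. u \<in> controls T U \<Longrightarrow> t \<in> {0..T} \<Longrightarrow>
                 ((\<lambda>s. transpose (Dfx s (xs u s) (u s)) *v lam u s + \<phi>x s (xs u s) (u s))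
                    has_integral (lam u t - \<psi>x (xs u T))) {t..T}"
    and X_bdd: "bounded X" and Lam_bdd: "bounded \<Lambda>"
    and xs_X: "\<And>u t. u \<in> controls T U \<Longrightarrow> t \<in> {0..T} \<Longrightarrow> xs u t \<in> X"
    and lam_Lam: "\<And>u t. u \<in> controls T U \<Longrightarrow> t \<in> {0..T} \<Longrightarrow> lam u t \<in> \<Lambda>"
    and N_norm: "is_norm N" and NU_norm: "is_norm NU"
    \<comment> \<open>(A1)\<close>
    and c_pos: "c > 0"
    and A1: "\<And>t v x. t \<in> {0..T} \<Longrightarrow> v \<in> U \<Longrightarrow> log_norm N (Dfx t x v) \<le> - c"
    and A1_bdd: "bounded (xs (\<lambda>_. 0) ` {0..T})"
    \<comment> \<open>(A2)\<close>
    and A2: "\<And>t x. t \<in> {0..T} \<Longrightarrow> lip_with NU N U (\<lambda>v. f t x v) l_fu"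
    \<comment> \<open>(A3)\<close>
    and A3x: "\<And>t v l. t \<in> {0..T} \<Longrightarrow> v \<in> U \<Longrightarrow> l \<in> \<Lambda> \<Longrightarrow>
                lip_with N (dual_norm N) UNIV (\<lambda>x. transpose (Dfx t x v) *v l) l_fxx"
    and A3u: "\<And>t x l. t \<in> {0..T} \<Longrightarrow> x \<in> X \<Longrightarrow> l \<in> \<Lambda> \<Longrightarrow>
                lip_with NU (dual_norm N) U (\<lambda>v. transpose (Dfx t x v) *v l) l_fxu"
    \<comment> \<open>(A4)\<close>
    and A4x: "\<And>t v. t \<in> {0..T} \<Longrightarrow> v \<in> U \<Longrightarrow> lip_with N (dual_norm N) UNIV (\<lambda>x. \<phi>x t x v) l_phixx"
    and A4u: "\<And>t x. t \<in> {0..T} \<Longrightarrow> x \<in> X \<Longrightarrow> lip_with NU (dual_norm N) U (\<lambda>v. \<phi>x t x v) l_phixu"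
    and A4psi: "lip_with N (dual_norm N) UNIV \<psi>x l_psixx"
    \<comment> \<open>(A5)\<close>
    and h_U: "\<And>t x l. t \<in> {0..T} \<Longrightarrow> x \<in> X \<Longrightarrow> l \<in> \<Lambda> \<Longrightarrow> h t x l \<in> U"
    and h_argmin: "\<And>t x l v. t \<in> {0..T} \<Longrightarrow> x \<in> X \<Longrightarrow> l \<in> \<Lambda> \<Longrightarrow> v \<in> U \<Longrightarrow>
                hamiltonian f \<phi> t x l (h t x l) \<le> hamiltonian f \<phi> t x l v"
    and A5x: "\<And>t l. t \<in> {0..T} \<Longrightarrow> l \<in> \<Lambda> \<Longrightarrow> lip_with N NU X (\<lambda>x. h t x l) l_hx"
    and A5l: "\<And>t x. t \<in> {0..T} \<Longrightarrow> x \<in> X \<Longrightarrow> lip_with (dual_norm N) NU \<Lambda> (\<lambda>l. h t x l) l_hl"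
    \<comment> \<open>MSA operator on controls\<close>
    and MSA_maps: "\<And>u. u \<in> controls T U \<Longrightarrow> MSA u \<in> controls T U"
    and MSA_h: "\<And>u t. u \<in> controls T U \<Longrightarrow> t \<in> {0..T} \<Longrightarrow> MSA u t = h t (xs u t) (lam u t)"
    and consts_nonneg: "l_fu \<ge> 0" "l_fxx \<ge> 0" "l_fxu \<ge> 0" "l_phixx \<ge> 0" "l_phixu \<ge> 0"
        "l_psixx \<ge> 0" "l_hx \<ge> 0" "l_hl \<ge> 0"
  shows "let \<kappa> = (1 - exp (- c * T)) / c;
             b1 = l_hx * l_fu + l_hl * (l_psixx * l_fu + l_phixu + l_fxu);
             b2 = l_hl * l_fu * (l_phixx + l_fxx);
             L = b1 * \<kappa> + b2 * \<kappa>^2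
         in (\<forall>u\<in>controls T U. \<forall>v\<in>controls T U.
                 ctrl_dist T NU (MSA u) (MSA v) \<le> L * ctrl_dist T NU u v)
            \<and> (L < 1 \<longrightarrow>
                 (\<exists>!uh. uh \<in> controls T U \<and> MSA uh = uh)
               \<and> (\<forall>uh u0. uh \<in> controls T U \<and> MSA uh = uh \<and> u0 \<in> controls T U \<longrightarrow>
                     ((\<lambda>i. ctrl_dist T NU ((MSA ^^ i) u0) uh) \<longlonglongrightarrow> 0)
                   \<and> (\<forall>i t. t \<in> {0..T} \<longrightarrow>
                        NU ((MSA ^^ i) u0 t - uh t)
                          \<le> L ^ i / (1 - L) * ctrl_dist T NU (MSA u0) u0)))"
proof -
  note n = N_norm and nu = NU_norm
  have T0: "T \<ge> 0" using T_pos by simp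
  obtain CN where CN: "CN > 0" "\<And>x. N x \<le> CN * norm x" using is_norm_upper[OF n] by blast
  obtain CD where CD: "CD > 0" "\<And>z. dual_norm N z \<le> CD * norm z" using dual_norm_upper[OF n] by blast
  define \<kappa> where "\<kappa> = (1 - exp (- c * T)) / c"
  have kap_le: "(1 - exp (- c * r)) / c \<le> \<kappa>" if "r \<le> T" for r
  proof -
    have "exp (- c * T) \<le> exp (- c * r)" using that c_pos by simp
    then show ?thesis unfolding \<kappa>_def using c_pos by (simp add: divide_right_mono)
  qed
  have kap_ge: "(1 - exp (- c * r)) / c \<ge> 0" if "r \<ge> 0" for r
    using that c_pos by simp
  have kap: "\<kappa> \<ge> 0" unfolding \<kappa>_def using kap_ge[OF T0] by simp
  have xs0: "xs u 0 = x0" if "u \<in> controls T U" for u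
  proof -
    have "((\<lambda>s. f s (xs u s) (u s)) has_integral (xs u 0 - x0)) {0..0}" using state[OF that, of 0] T0 by simp
    moreover have "((\<lambda>s. f s (xs u s) (u s)) has_integral 0) {0..0}" using has_integral_refl(1)[of _ 0] by simp
    ultimately have "xs u 0 - x0 = 0" by (rule has_integral_unique)
    then show ?thesis by simp
  qed
  have lamT: "lam u T = \<psi>x (xs u T)" if "u \<in> controls T U" for u
  proof -
    have "((\<lambda>s. transpose (Dfx s (xs u s) (u s)) *v lam u s + \<phi>x s (xs u s) (u s)) has_integral (lam u T - \<psi>x (xs u T))) {T..T}"
      using costate[OF that, of T] T0 by simp
    moreover have "((\<lambda>s. transpose (Dfx s (xs u s) (u s)) *v lam u s + \<phi>x s (xs u s) (u s)) has_integral 0) {T..T}"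
      using has_integral_refl(1)[of _ T] by simp
    ultimately have "lam u T - \<psi>x (xs u T) = 0" by (rule has_integral_unique)
    then show ?thesis by simp
  qed
  have uU: "u t \<in> U" if "u \<in> controls T U" "t \<in> {0..T}" for u t
    using that unfolding controls_def by auto
  have FW: "N (xs u t - xs v t) \<le> l_fu * ctrl_dist T NU u v * \<kappa>"
    if uv: "u \<in> controls T U" "v \<in> controls T U" and t: "t \<in> {0..T}" for u v t
  proof -
    define d where "d = ctrl_dist T NU u v"
    have d: "d \<ge> 0" unfolding d_def by (rule ctrl_dist_nonneg[OF T0 U_compact nu uv])
    have dge: "NU (u s - v s) \<le> d" if "s \<in> {0..T}" for s
      unfolding d_def by (rule ctrl_dist_ge[OF T0 U_compact nu uv that])
    have K: "l_fu * d \<ge> 0" using d consts_nonneg by simp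
    have gr: "N (xs u t - xs v t) \<le> exp (- c * (t - 0)) * N (xs u 0 - xs v 0) + (l_fu * d) * (1 - exp (- c * (t - 0))) / c"
    proof (rule gronwall_gauge[where F="\<lambda>s. f s (xs u s) (u s) - f s (xs v s) (v s)" and C=CN
          and e="\<lambda>s. xs u s - xs v s" and Nn=N and a=0 and b=t and K="l_fu * d" and c=c])
      show "0 \<le> t" "c > 0" "l_fu * d \<ge> 0" "CN > 0" using t c_pos K CN by auto
      show "N (x + y) \<le> N x + N y" for x y by (rule is_normD(1)[OF n])
      show "N (r *\<^sub>R x) = \<bar>r\<bar> * N x" for r x by (rule is_normD(2)[OF n])
      show "N x \<le> CN * norm x" for x by (rule CN(2))
    next
      fix s s' assume ss: "0 \<le> s" "s \<le> s'" "s' \<le> t"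
      have A: "((\<lambda>s. f s (xs u s) (u s)) has_integral (xs u s' - xs u s)) {s..s'}"
        by (rule integ_sub[where T=T and xst=x0]) (use state[OF uv(1)] ss t in auto)
      have B: "((\<lambda>s. f s (xs v s) (v s)) has_integral (xs v s' - xs v s)) {s..s'}"
        by (rule integ_sub[where T=T and xst=x0]) (use state[OF uv(2)] ss t in auto)
      from has_integral_diff[OF A B]
      show "((\<lambda>s. f s (xs u s) (u s) - f s (xs v s) (v s)) has_integral
          (xs u s' - xs v s' - (xs u s - xs v s))) {s..s'}"
        by (rule has_integral_eq_rhs) (simp add: algebra_simps)
    next
      fix s \<epsilon> :: real assume s: "s \<in> {0..t}" and \<epsilon>: "\<epsilon> > 0"
      have sT: "s \<in> {0..T}" using s t by auto
      have us: "u s \<in> U" "v s \<in> U" using uU[OF uv(1) sT] uU[OF uv(2) sT] by auto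
      have ev: "\<forall>\<^sub>F h in at_right 0. N ((xs u s - xs v s) + h *\<^sub>R (f s (xs u s) (u s) - f s (xs v s) (u s)))
               \<le> N (xs u s - xs v s) + h * (- c * N (xs u s - xs v s) + \<epsilon>)"
        by (rule osl[OF n _ _ _ \<epsilon>, where g="\<lambda>y. f s y (u s)" and A="\<lambda>z. Dfx s z (u s)"])
           (use f_dx[OF sT us(1)] Dfx_cont[OF sT us(1)] A1[OF sT us(1)] in auto)
      show "\<forall>\<^sub>F h in at_right 0. N (xs u s - xs v s + h *\<^sub>R (f s (xs u s) (u s) - f s (xs v s) (v s)))
               \<le> N (xs u s - xs v s) + h * (- c * N (xs u s - xs v s) + l_fu * d + \<epsilon>)"
      proof (rule eventually_mono[OF eventually_conj[OF ev eventually_at_right_less]])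
        fix h :: real
        assume hh: "N ((xs u s - xs v s) + h *\<^sub>R (f s (xs u s) (u s) - f s (xs v s) (u s)))
               \<le> N (xs u s - xs v s) + h * (- c * N (xs u s - xs v s) + \<epsilon>) \<and> 0 < h"
        have eq: "xs u s - xs v s + h *\<^sub>R (f s (xs u s) (u s) - f s (xs v s) (v s))
            = ((xs u s - xs v s) + h *\<^sub>R (f s (xs u s) (u s) - f s (xs v s) (u s)))
              + h *\<^sub>R (f s (xs v s) (u s) - f s (xs v s) (v s))"
          by (simp add: algebra_simps)
        have "N (h *\<^sub>R (f s (xs v s) (u s) - f s (xs v s) (v s))) = h * N (f s (xs v s) (u s) - f s (xs v s) (v s))"
          using is_normD(2)[OF n] hh by simp
        also have "\<dots> \<le> h * (l_fu * NU (u s - v s))"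
          using A2[OF sT, of "xs v s"] us hh unfolding lip_with_def by (intro mult_left_mono) auto
        also have "\<dots> \<le> h * (l_fu * d)"
          using dge[OF sT] consts_nonneg hh by (intro mult_left_mono) auto
        finally have "N (h *\<^sub>R (f s (xs v s) (u s) - f s (xs v s) (v s))) \<le> h * (l_fu * d)" .
        moreover have "N (((xs u s - xs v s) + h *\<^sub>R (f s (xs u s) (u s) - f s (xs v s) (u s)))
              + h *\<^sub>R (f s (xs v s) (u s) - f s (xs v s) (v s)))
            \<le> N ((xs u s - xs v s) + h *\<^sub>R (f s (xs u s) (u s) - f s (xs v s) (u s)))
              + N (h *\<^sub>R (f s (xs v s) (u s) - f s (xs v s) (v s)))" by (rule is_normD(1)[OF n])
        moreover have "h * (- c * N (xs u s - xs v s) + l_fu * d + \<epsilon>)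
            = h * (- c * N (xs u s - xs v s) + \<epsilon>) + h * (l_fu * d)" by (simp add: algebra_simps)
        ultimately show "N (xs u s - xs v s + h *\<^sub>R (f s (xs u s) (u s) - f s (xs v s) (v s)))
               \<le> N (xs u s - xs v s) + h * (- c * N (xs u s - xs v s) + l_fu * d + \<epsilon>)"
          unfolding eq using hh by linarith
      qed
    qed
    also have "\<dots> = (l_fu * d) * ((1 - exp (- c * t)) / c)"
      using xs0[OF uv(1)] xs0[OF uv(2)] is_norm_zero[OF n] by simp
    also have "\<dots> \<le> (l_fu * d) * \<kappa>" using kap_le[of t] t K by (intro mult_left_mono) auto
    finally show ?thesis unfolding d_def .
  qed
  have BW: "dual_norm N (lam u t - lam v t)
      \<le> (l_psixx * l_fu * \<kappa> + ((l_fxx + l_phixx) * l_fu * \<kappa> + (l_fxu + l_phixu)) * \<kappa>) * ctrl_dist T NU u v"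
    if uv: "u \<in> controls T U" "v \<in> controls T U" and t: "t \<in> {0..T}" for u v t
  proof -
    define d where "d = ctrl_dist T NU u v"
    have d: "d \<ge> 0" unfolding d_def by (rule ctrl_dist_nonneg[OF T0 U_compact nu uv])
    have dge: "NU (u s - v s) \<le> d" if "s \<in> {0..T}" for s
      unfolding d_def by (rule ctrl_dist_ge[OF T0 U_compact nu uv that])
    define Kp where "Kp = (l_fxx + l_phixx) * (l_fu * d * \<kappa>) + (l_fxu + l_phixu) * d"
    have Kp: "Kp \<ge> 0" unfolding Kp_def using consts_nonneg d kap by simp
    define G where "G w r = transpose (Dfx r (xs w r) (w r)) *v lam w r + \<phi>x r (xs w r) (w r)" for w r
    have rho: "dual_norm N (G u r - G v r - transpose (Dfx r (xs u r) (u r)) *v (lam u r - lam v r)) \<le> Kp"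
      if r: "r \<in> {0..T}" for r
    proof -
      have ur: "u r \<in> U" "v r \<in> U" using uU[OF uv(1) r] uU[OF uv(2) r] by auto
      have xv: "xs v r \<in> X" using xs_X[OF uv(2) r] .
      have lv: "lam v r \<in> \<Lambda>" using lam_Lam[OF uv(2) r] .
      define P1 where "P1 = transpose (Dfx r (xs u r) (u r)) *v lam v r - transpose (Dfx r (xs v r) (u r)) *v lam v r"
      define P2 where "P2 = transpose (Dfx r (xs v r) (u r)) *v lam v r - transpose (Dfx r (xs v r) (v r)) *v lam v r"
      define P3 where "P3 = \<phi>x r (xs u r) (u r) - \<phi>x r (xs v r) (u r)"
      define P4 where "P4 = \<phi>x r (xs v r) (u r) - \<phi>x r (xs v r) (v r)"
      have eq: "G u r - G v r - transpose (Dfx r (xs u r) (u r)) *v (lam u r - lam v r) = P1 + P2 + P3 + P4"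
        unfolding G_def P1_def P2_def P3_def P4_def by (simp add: matrix_vector_mult_diff_distrib algebra_simps)
      have "dual_norm N (P1 + P2 + P3 + P4) \<le> dual_norm N P1 + dual_norm N P2 + dual_norm N P3 + dual_norm N P4"
        using dual_norm_triangle[OF n, of "P1 + P2 + P3" P4] dual_norm_triangle[OF n, of "P1 + P2" P3]
          dual_norm_triangle[OF n, of P1 P2] by linarith
      moreover have "dual_norm N P1 \<le> l_fxx * N (xs u r - xs v r)"
        using A3x[OF r ur(1) lv] unfolding lip_with_def P1_def by blast
      moreover have "dual_norm N P2 \<le> l_fxu * NU (u r - v r)"
        using A3u[OF r xv lv] ur unfolding lip_with_def P2_def by blast
      moreover have "dual_norm N P3 \<le> l_phixx * N (xs u r - xs v r)"
        using A4x[OF r ur(1)] unfolding lip_with_def P3_def by blast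
      moreover have "dual_norm N P4 \<le> l_phixu * NU (u r - v r)"
        using A4u[OF r xv] ur unfolding lip_with_def P4_def by blast
      moreover have "l_fxx * N (xs u r - xs v r) \<le> l_fxx * (l_fu * d * \<kappa>)"
        using FW[OF uv r] consts_nonneg unfolding d_def by (intro mult_left_mono) auto
      moreover have "l_phixx * N (xs u r - xs v r) \<le> l_phixx * (l_fu * d * \<kappa>)"
        using FW[OF uv r] consts_nonneg unfolding d_def by (intro mult_left_mono) auto
      moreover have "l_fxu * NU (u r - v r) \<le> l_fxu * d" using dge[OF r] consts_nonneg by (intro mult_left_mono) auto
      moreover have "l_phixu * NU (u r - v r) \<le> l_phixu * d" using dge[OF r] consts_nonneg by (intro mult_left_mono) auto
      moreover have "Kp = l_fxx * (l_fu * d * \<kappa>) + l_phixx * (l_fu * d * \<kappa>) + l_fxu * d + l_phixu * d"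
        unfolding Kp_def by (simp add: algebra_simps)
      ultimately show ?thesis unfolding eq by linarith
    qed
    have Gint: "(G w has_integral (lam w s - \<psi>x (xs w T))) {s..T}" if "w \<in> controls T U" "s \<in> {0..T}" for w s
      using costate[OF that] unfolding G_def by simp
    have gr: "dual_norm N (lam u (T - (T - t)) - lam v (T - (T - t)))
       \<le> exp (- c * ((T - t) - 0)) * dual_norm N (lam u (T - 0) - lam v (T - 0)) + Kp * (1 - exp (- c * ((T - t) - 0))) / c"
    proof (rule gronwall_gauge[where F="\<lambda>s. G u (T - s) - G v (T - s)" and C=CD
          and e="\<lambda>s. lam u (T - s) - lam v (T - s)" and Nn="dual_norm N" and a=0 and b="T - t" and K=Kp and c=c])
      show "0 \<le> T - t" "c > 0" "Kp \<ge> 0" "CD > 0" using t c_pos Kp CD by auto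
      show "dual_norm N (x + y) \<le> dual_norm N x + dual_norm N y" for x y by (rule dual_norm_triangle[OF n])
      show "dual_norm N (r *\<^sub>R x) = \<bar>r\<bar> * dual_norm N x" for r x by (rule dual_norm_scale[OF n])
      show "dual_norm N x \<le> CD * norm x" for x by (rule CD(2))
    next
      fix s s' assume ss: "0 \<le> s" "s \<le> s'" "s' \<le> T - t"
      have "(G u has_integral (lam u (T - s') - lam u (T - s))) {T - s'..T - s}"
        by (rule integ_sub_back[where T=T and z="\<psi>x (xs u T)"]) (use Gint[OF uv(1)] ss t in auto)
      from reflect_T[OF this, of T]
      have A: "((\<lambda>\<sigma>. G u (T - \<sigma>)) has_integral (lam u (T - s') - lam u (T - s))) {s..s'}" by simp
      have "(G v has_integral (lam v (T - s') - lam v (T - s))) {T - s'..T - s}"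
        by (rule integ_sub_back[where T=T and z="\<psi>x (xs v T)"]) (use Gint[OF uv(2)] ss t in auto)
      from reflect_T[OF this, of T]
      have B: "((\<lambda>\<sigma>. G v (T - \<sigma>)) has_integral (lam v (T - s') - lam v (T - s))) {s..s'}" by simp
      from has_integral_diff[OF A B]
      show "((\<lambda>s. G u (T - s) - G v (T - s)) has_integral
          (lam u (T - s') - lam v (T - s') - (lam u (T - s) - lam v (T - s)))) {s..s'}"
        by (rule has_integral_eq_rhs) (simp add: algebra_simps)
    next
      fix s \<epsilon> :: real assume s: "s \<in> {0..T - t}" and \<epsilon>: "\<epsilon> > 0"
      define r where "r = T - s"
      have r: "r \<in> {0..T}" using s t unfolding r_def by auto
      define \<delta> where "\<delta> = lam u r - lam v r"
      define A where "A = Dfx r (xs u r) (u r)"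
      define \<rho> where "\<rho> = G u r - G v r - transpose A *v \<delta>"
      have \<rho>: "dual_norm N \<rho> \<le> Kp" using rho[OF r] unfolding \<rho>_def A_def \<delta>_def .
      have Nd0: "dual_norm N \<delta> \<ge> 0" by (rule dual_norm_nonneg[OF n])
      define \<epsilon>' where "\<epsilon>' = \<epsilon> / (dual_norm N \<delta> + 1)"
      have \<epsilon>': "\<epsilon>' > 0" "\<epsilon>' * dual_norm N \<delta> \<le> \<epsilon>"
        unfolding \<epsilon>'_def using \<epsilon> Nd0 by (auto simp: field_simps)
      have ev: "\<forall>\<^sub>F h in at_right 0. induced_norm N (mat 1 + h *\<^sub>R A) \<le> 1 + h * (- c + \<epsilon>')"
        unfolding A_def by (rule log_norm_eventually[OF n A1[OF r uU[OF uv(1) r]] \<epsilon>'(1)])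
      show "\<forall>\<^sub>F h in at_right 0. dual_norm N (lam u (T - s) - lam v (T - s) + h *\<^sub>R (G u (T - s) - G v (T - s)))
          \<le> dual_norm N (lam u (T - s) - lam v (T - s)) + h * (- c * dual_norm N (lam u (T - s) - lam v (T - s)) + Kp + \<epsilon>)"
        unfolding r_def[symmetric] \<delta>_def[symmetric]
      proof (rule eventually_mono[OF eventually_conj[OF ev eventually_at_right_less]])
        fix h :: real assume hh: "induced_norm N (mat 1 + h *\<^sub>R A) \<le> 1 + h * (- c + \<epsilon>') \<and> 0 < h"
        have eq: "\<delta> + h *\<^sub>R (G u r - G v r) = (\<delta> + h *\<^sub>R (transpose A *v \<delta>)) + h *\<^sub>R \<rho>"
          unfolding \<rho>_def by (simp add: algebra_simps)
        have "dual_norm N (\<delta> + h *\<^sub>R (G u r - G v r)) \<le> dual_norm N (\<delta> + h *\<^sub>R (transpose A *v \<delta>)) + dual_norm N (h *\<^sub>R \<rho>)"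
          unfolding eq by (rule dual_norm_triangle[OF n])
        also have "dual_norm N (h *\<^sub>R \<rho>) \<le> h * Kp"
          using dual_norm_scale[OF n, of h \<rho>] \<rho> hh by (simp add: mult_left_mono)
        also have "dual_norm N (\<delta> + h *\<^sub>R (transpose A *v \<delta>)) \<le> induced_norm N (mat 1 + h *\<^sub>R A) * dual_norm N \<delta>"
          by (rule dual_transpose_bound[OF n])
        also have "\<dots> \<le> (1 + h * (- c + \<epsilon>')) * dual_norm N \<delta>"
          using hh Nd0 by (intro mult_right_mono) auto
        also have "(1 + h * (- c + \<epsilon>')) * dual_norm N \<delta> = dual_norm N \<delta> + h * (- c * dual_norm N \<delta>) + h * (\<epsilon>' * dual_norm N \<delta>)"
          by (simp add: algebra_simps)
        also have "h * (\<epsilon>' * dual_norm N \<delta>) \<le> h * \<epsilon>" using \<epsilon>'(2) hh by (intro mult_left_mono) auto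
        finally show "dual_norm N (\<delta> + h *\<^sub>R (G u r - G v r)) \<le> dual_norm N \<delta> + h * (- c * dual_norm N \<delta> + Kp + \<epsilon>)"
          by (simp add: algebra_simps)
      qed
    qed
    have e1: "exp (- c * (T - t)) \<le> 1" "exp (- c * (T - t)) \<ge> 0" using t c_pos by auto
    have lT: "dual_norm N (lam u T - lam v T) \<le> l_psixx * (l_fu * d * \<kappa>)"
    proof -
      have "dual_norm N (lam u T - lam v T) \<le> l_psixx * N (xs u T - xs v T)"
        using A4psi unfolding lip_with_def lamT[OF uv(1)] lamT[OF uv(2)] by blast
      also have "\<dots> \<le> l_psixx * (l_fu * d * \<kappa>)"
        using FW[OF uv, of T] T0 consts_nonneg unfolding d_def by (intro mult_left_mono) auto
      finally show ?thesis .
    qed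
    have lT0: "dual_norm N (lam u T - lam v T) \<ge> 0" by (rule dual_norm_nonneg[OF n])
    have "dual_norm N (lam u t - lam v t) \<le> exp (- c * (T - t)) * dual_norm N (lam u T - lam v T) + Kp * ((1 - exp (- c * (T - t))) / c)"
      using gr by simp
    also have "exp (- c * (T - t)) * dual_norm N (lam u T - lam v T) \<le> 1 * (l_psixx * (l_fu * d * \<kappa>))"
      using e1 lT lT0 by (intro mult_mono) auto
    also have "Kp * ((1 - exp (- c * (T - t))) / c) \<le> Kp * \<kappa>"
      using kap_le[of "T - t"] t Kp by (intro mult_left_mono) auto
    also have "1 * (l_psixx * (l_fu * d * \<kappa>)) + Kp * \<kappa>
        = (l_psixx * l_fu * \<kappa> + ((l_fxx + l_phixx) * l_fu * \<kappa> + (l_fxu + l_phixu)) * \<kappa>) * d"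
      unfolding Kp_def by (simp add: algebra_simps)
    finally show ?thesis unfolding d_def by simp
  qed
  define b1 where "b1 = l_hx * l_fu + l_hl * (l_psixx * l_fu + l_phixu + l_fxu)"
  define b2 where "b2 = l_hl * l_fu * (l_phixx + l_fxx)"
  define L where "L = b1 * \<kappa> + b2 * \<kappa>^2"
  have L0: "L \<ge> 0" unfolding L_def b1_def b2_def using consts_nonneg kap by simp
  have lip: "\<forall>u\<in>controls T U. \<forall>v\<in>controls T U. ctrl_dist T NU (MSA u) (MSA v) \<le> L * ctrl_dist T NU u v"
  proof (intro ballI)
    fix u v assume u: "u \<in> controls T U" and v: "v \<in> controls T U"
    define d where "d = ctrl_dist T NU u v"
    have d: "d \<ge> 0" unfolding d_def by (rule ctrl_dist_nonneg[OF T0 U_compact nu u v])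
    show "ctrl_dist T NU (MSA u) (MSA v) \<le> L * ctrl_dist T NU u v"
    proof (rule ctrl_dist_le[OF T0 U_compact nu])
      fix t assume t: "t \<in> {0..T}"
      have eq: "MSA u t - MSA v t = (h t (xs u t) (lam u t) - h t (xs v t) (lam u t)) + (h t (xs v t) (lam u t) - h t (xs v t) (lam v t))"
        using MSA_h[OF u t] MSA_h[OF v t] by simp
      have f1: "NU (MSA u t - MSA v t) \<le> NU (h t (xs u t) (lam u t) - h t (xs v t) (lam u t)) + NU (h t (xs v t) (lam u t) - h t (xs v t) (lam v t))"
        unfolding eq by (rule is_normD(1)[OF nu])
      have f2: "NU (h t (xs u t) (lam u t) - h t (xs v t) (lam u t)) \<le> l_hx * N (xs u t - xs v t)"
        using A5x[OF t lam_Lam[OF u t]] xs_X[OF u t] xs_X[OF v t] unfolding lip_with_def by blast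
      have f3: "NU (h t (xs v t) (lam u t) - h t (xs v t) (lam v t)) \<le> l_hl * dual_norm N (lam u t - lam v t)"
        using A5l[OF t xs_X[OF v t]] lam_Lam[OF u t] lam_Lam[OF v t] unfolding lip_with_def by blast
      have f4: "l_hx * N (xs u t - xs v t) \<le> l_hx * (l_fu * d * \<kappa>)"
        using FW[OF u v t] consts_nonneg unfolding d_def by (intro mult_left_mono) auto
      have f5: "l_hl * dual_norm N (lam u t - lam v t)
          \<le> l_hl * ((l_psixx * l_fu * \<kappa> + ((l_fxx + l_phixx) * l_fu * \<kappa> + (l_fxu + l_phixu)) * \<kappa>) * d)"
        using BW[OF u v t] consts_nonneg unfolding d_def by (intro mult_left_mono) auto
      have f6: "l_hx * (l_fu * d * \<kappa>) + l_hl * ((l_psixx * l_fu * \<kappa> + ((l_fxx + l_phixx) * l_fu * \<kappa> + (l_fxu + l_phixu)) * \<kappa>) * d)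
          = L * d"
        unfolding L_def b1_def b2_def by (simp add: algebra_simps power2_eq_square)
      from f1 f2 f3 f4 f5 f6 show "NU (MSA u t - MSA v t) \<le> L * ctrl_dist T NU u v" unfolding d_def by linarith
    qed
  qed
  have cr: "(\<exists>!uh. uh \<in> controls T U \<and> MSA uh = uh)
       \<and> (\<forall>uh u0. uh \<in> controls T U \<and> MSA uh = uh \<and> u0 \<in> controls T U \<longrightarrow>
             ((\<lambda>i. ctrl_dist T NU ((MSA ^^ i) u0) uh) \<longlonglongrightarrow> 0)
           \<and> (\<forall>i t. t \<in> {0..T} \<longrightarrow>
                NU ((MSA ^^ i) u0 t - uh t) \<le> L ^ i / (1 - L) * ctrl_dist T NU (MSA u0) u0))"
    if L1: "L < 1"
    by (rule contraction_result[OF T0 U_compact nu, where MSA=MSA and L=L]) (use MSA_maps lip L0 L1 U_zero in auto)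
  show ?thesis
    unfolding Let_def using lip cr unfolding L_def b1_def b2_def \<kappa>_def by blast
qed

end
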